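(* Let $G$ be an ample Hausdorff groupoid, let $R$ be a commutative unital ring with the discrete topology, let $T \le R^\times$, let $(\Sigma,i,q)$ be a topologically trivial discrete twist by $T$ over $G$, and let $P\colon G \to \Sigma$ be any continuous global section. Then for $f, g \in A_R(G;\Sigma)$ the formula \[ (f *_\Sigma g)(\varepsilon) := \sum_{\gamma \in G^{s(q(\varepsilon))}} f(\varepsilon P(\gamma))\, g(P(\gamma)^{-1}) \] is a finite sum, is independent of the choice of $P$, and defines an element of $A_R(G;\Sigma)$; with this multiplication $A_R(G;\Sigma)$ is an $R$-algebra. If $R$ has a $T$-inverse involution $r \mapsto \overline{r}$, then $f^*(\varepsilon) := \overline{f(\varepsilon^{-1})}$ defines an involution on $A_R(G;\Sigma)$ under which it is a $*$-algebra over $R$.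
   Context: Groupoids are locally compact Hausdorff topological groupoids; $G$ is ample if it has a basis of compact open bisections; $G^x = r^{-1}(x)$. A discrete twist by $T$ over $G$ is a sequence $G^{(0)} \times T \xrightarrow{i} \Sigma \xrightarrow{q} G$, where $T$ carries the discrete topology, $G^{(0)} \times T$ is the trivial group bundle with fibres $T$, $\Sigma$ is a Hausdorff groupoid with $\Sigma^{(0)} = i(G^{(0)} \times \{1\})$, and $i, q$ are continuous groupoid homomorphisms restricting to homeomorphisms of unit spaces, such that: (1) $i(\{x\} \times T) = q^{-1}(x)$ for all $x$, $i$ injective, $q$ a quotient map; (2) for each $\alpha \in G$ there are an open bisection $B_\alpha \ni \alpha$ and continuous $P_\alpha\colon B_\alpha \to \Sigma$ with $q\circ P_\alpha = \mathrm{id}$ such that $(\beta,z) \mapsto i(r(\beta),z)P_\alpha(\beta)$ is a homeomorphism $B_\alpha \times T \to q^{-1}(B_\alpha)$; (3) $i(r(\varepsilon),z)\varepsilon = \varepsilon\, i(s(\varepsilon),z)$. $T$ acts on $\Sigma$ by $z\cdot\varepsilon := i(r(\varepsilon),z)\varepsilon$. A continuous global section is a continuous $P\colon G \to \Sigma$ with $q\circ P = \mathrm{id}_G$ and $P(G^{(0)}) \subseteq \Sigma^{(0)}$; the twist is topologically trivial if one exists. $A_R(G;\Sigma)$ is the $R$-module (pointwise operations) of continuous $f\colon\Sigma\to R$ that are $T$-equivariant ($f(z\cdot\varepsilon) = zf(\varepsilon)$) and such that $\overline{q(\{f\neq0\})}$ is compact. A $T$-inverse involution on $R$ is a ring involution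 $r\mapsto\overline{r}$ with $\overline{z} = z^{-1}$ for $z\in T$. *)

theory Defs
  imports "HOL-Analysis.Analysis"
begin

record 'a tgroupoid =
  gcarrier :: "'a set"
  gr :: "'a \<Rightarrow> 'a"
  gs :: "'a \<Rightarrow> 'a"
  gmult :: "'a \<Rightarrow> 'a \<Rightarrow> 'a"
  ginv :: "'a \<Rightarrow> 'a"
  gtop :: "'a topology"

definition gunits :: "('a, 'b) tgroupoid_scheme \<Rightarrow> 'a set" where
  "gunits G = gr G ` gcarrier G"

definition composable :: "('a, 'b) tgroupoid_scheme \<Rightarrow> ('a \<times> 'a) set" where
  "composable G = {(a, b). a \<in> gcarrier G \<and> b \<in> gcarrier G \<and> gs G a = gr G b}"

definition groupoid :: "('a, 'b) tgroupoid_scheme \<Rightarrow> bool" where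
  "groupoid G \<longleftrightarrow>
     (\<forall>a\<in>gcarrier G. gr G a \<in> gcarrier G \<and> gs G a \<in> gcarrier G \<and> ginv G a \<in> gcarrier G) \<and>
     (\<forall>a\<in>gcarrier G. gr G (gr G a) = gr G a \<and> gs G (gr G a) = gr G a \<and>
                      gr G (gs G a) = gs G a \<and> gs G (gs G a) = gs G a) \<and>
     (\<forall>(a, b)\<in>composable G. gmult G a b \<in> gcarrier G \<and>
                      gr G (gmult G a b) = gr G a \<and> gs G (gmult G a b) = gs G b) \<and>
     (\<forall>a\<in>gcarrier G. \<forall>b\<in>gcarrier G. \<forall>c\<in>gcarrier G.
        gs G a = gr G b \<and> gs G b = gr G c \<longrightarrow>
        gmult G (gmult G a b) c = gmult G a (gmult G b c)) \<and>
     (\<forall>a\<in>gcarrier G. gmult G (gr G a) a = a \<and> gmult G a (gs G a) = a) \<and>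
     (\<forall>a\<in>gcarrier G. gr G (ginv G a) = gs G a \<and> gs G (ginv G a) = gr G a \<and>
                      gmult G a (ginv G a) = gr G a \<and> gmult G (ginv G a) a = gs G a)"

definition topological_groupoid :: "('a, 'b) tgroupoid_scheme \<Rightarrow> bool" where
  "topological_groupoid G \<longleftrightarrow> groupoid G \<and> topspace (gtop G) = gcarrier G \<and>
     continuous_map (subtopology (prod_topology (gtop G) (gtop G)) (composable G)) (gtop G)
       (\<lambda>(a, b). gmult G a b) \<and>
     continuous_map (gtop G) (gtop G) (ginv G)"

definition bisection :: "('a, 'b) tgroupoid_scheme \<Rightarrow> 'a set \<Rightarrow> bool" where
  "bisection G B \<longleftrightarrow> B \<subseteq> gcarrier G \<and>
     openin (subtopology (gtop G) (gunits G)) (gr G ` B) \<and>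
     homeomorphic_map (subtopology (gtop G) B) (subtopology (gtop G) (gr G ` B)) (gr G) \<and>
     openin (subtopology (gtop G) (gunits G)) (gs G ` B) \<and>
     homeomorphic_map (subtopology (gtop G) B) (subtopology (gtop G) (gs G ` B)) (gs G)"

definition lch_groupoid :: "('a, 'b) tgroupoid_scheme \<Rightarrow> bool" where
  "lch_groupoid G \<longleftrightarrow> topological_groupoid G \<and> Hausdorff_space (gtop G) \<and>
     locally_compact_space (gtop G)"

definition ample_groupoid :: "('a, 'b) tgroupoid_scheme \<Rightarrow> bool" where
  "ample_groupoid G \<longleftrightarrow> lch_groupoid G \<and>
     (\<forall>U. openin (gtop G) U \<longrightarrow> (\<forall>x\<in>U. \<exists>B. compactin (gtop G) B \<and> openin (gtop G) B \<and>
          bisection G B \<and> x \<in> B \<and> B \<subseteq> U))"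

definition groupoid_hom ::
  "('a, 'c) tgroupoid_scheme \<Rightarrow> ('b, 'd) tgroupoid_scheme \<Rightarrow> ('a \<Rightarrow> 'b) \<Rightarrow> bool" where
  "groupoid_hom G H \<phi> \<longleftrightarrow> (\<forall>a\<in>gcarrier G. \<phi> a \<in> gcarrier H) \<and>
     (\<forall>(a, b)\<in>composable G. (\<phi> a, \<phi> b) \<in> composable H \<and>
        \<phi> (gmult G a b) = gmult H (\<phi> a) (\<phi> b))"

definition unit_subgroup :: "'r::comm_ring_1 set \<Rightarrow> bool" where
  "unit_subgroup T \<longleftrightarrow> 1 \<in> T \<and> (\<forall>z\<in>T. \<forall>w\<in>T. z * w \<in> T) \<and> (\<forall>z\<in>T. \<exists>w\<in>T. z * w = 1)"

definition trivial_bundle :: "('g, 'b) tgroupoid_scheme \<Rightarrow> 'r::comm_ring_1 set \<Rightarrow> ('g \<times> 'r) tgroupoid" where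
  "trivial_bundle G T =
     \<lparr> gcarrier = gunits G \<times> T,
       gr = (\<lambda>(x, z). (x, 1)),
       gs = (\<lambda>(x, z). (x, 1)),
       gmult = (\<lambda>(x, z) (y, w). (x, z * w)),
       ginv = (\<lambda>(x, z). (x, SOME w. w \<in> T \<and> z * w = 1)),
       gtop = prod_topology (subtopology (gtop G) (gunits G)) (discrete_topology T) \<rparr>"

definition discrete_twist ::
  "('g, 'b) tgroupoid_scheme \<Rightarrow> 'r::comm_ring_1 set \<Rightarrow> ('s, 'c) tgroupoid_scheme \<Rightarrow>
     ('g \<times> 'r \<Rightarrow> 's) \<Rightarrow> ('s \<Rightarrow> 'g) \<Rightarrow> bool" where
  "discrete_twist G T S i q \<longleftrightarrow>
     lch_groupoid G \<and>
     topological_groupoid S \<and> Hausdorff_space (gtop S) \<and>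
     gunits S = i ` (gunits G \<times> {1}) \<and>
     continuous_map (gtop (trivial_bundle G T)) (gtop S) i \<and>
     groupoid_hom (trivial_bundle G T) S i \<and>
     homeomorphic_map (subtopology (gtop (trivial_bundle G T)) (gunits G \<times> {1}))
                      (subtopology (gtop S) (gunits S)) i \<and>
     continuous_map (gtop S) (gtop G) q \<and>
     groupoid_hom S G q \<and>
     homeomorphic_map (subtopology (gtop S) (gunits S)) (subtopology (gtop G) (gunits G)) q \<and>
     \<comment> \<open>(1)\<close>
     (\<forall>x\<in>gunits G. i ` ({x} \<times> T) = {e \<in> gcarrier S. q e = x}) \<and>
     inj_on i (gunits G \<times> T) \<and>
     quotient_map (gtop S) (gtop G) q \<and>
     \<comment> \<open>(2) local triviality\<close>
     (\<forall>\<alpha>\<in>gcarrier G. \<exists>B Pa. openin (gtop G) B \<and> bisection G B \<and> \<alpha> \<in> B \<and>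
         continuous_map (subtopology (gtop G) B) (gtop S) Pa \<and>
         (\<forall>\<beta>\<in>B. q (Pa \<beta>) = \<beta>) \<and>
         homeomorphic_map (prod_topology (subtopology (gtop G) B) (discrete_topology T))
            (subtopology (gtop S) {e \<in> gcarrier S. q e \<in> B})
            (\<lambda>(\<beta>, z). gmult S (i (gr G \<beta>, z)) (Pa \<beta>))) \<and>
     \<comment> \<open>(3) centrality; r(e) in Sigma^(0) is identified with r(q e) in G^(0)\<close>
     (\<forall>e\<in>gcarrier S. \<forall>z\<in>T. gmult S (i (gr G (q e), z)) e = gmult S e (i (gs G (q e), z)))"

definition tact ::
  "('g, 'b) tgroupoid_scheme \<Rightarrow> ('s, 'c) tgroupoid_scheme \<Rightarrow> ('g \<times> 'r \<Rightarrow> 's) \<Rightarrow> ('s \<Rightarrow> 'g) \<Rightarrow>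
     'r \<Rightarrow> 's \<Rightarrow> 's" where
  "tact G S i q z e = gmult S (i (gr G (q e), z)) e"

definition continuous_global_section ::
  "('g, 'b) tgroupoid_scheme \<Rightarrow> ('s, 'c) tgroupoid_scheme \<Rightarrow> ('s \<Rightarrow> 'g) \<Rightarrow> ('g \<Rightarrow> 's) \<Rightarrow> bool" where
  "continuous_global_section G S q P \<longleftrightarrow> continuous_map (gtop G) (gtop S) P \<and>
     (\<forall>\<gamma>\<in>gcarrier G. q (P \<gamma>) = \<gamma>) \<and> P ` gunits G \<subseteq> gunits S"

definition topologically_trivial ::
  "('g, 'b) tgroupoid_scheme \<Rightarrow> ('s, 'c) tgroupoid_scheme \<Rightarrow> ('s \<Rightarrow> 'g) \<Rightarrow> bool" where
  "topologically_trivial G S q \<longleftrightarrow> (\<exists>P. continuous_global_section G S q P)"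

text \<open>Elements of A_R(G;Sigma); functions are taken to vanish off the carrier of Sigma
  (so that equality of elements is equality of HOL functions).  R is discrete.\<close>
definition twisted_steinberg ::
  "('g, 'b) tgroupoid_scheme \<Rightarrow> 'r::comm_ring_1 set \<Rightarrow> ('s, 'c) tgroupoid_scheme \<Rightarrow>
     ('g \<times> 'r \<Rightarrow> 's) \<Rightarrow> ('s \<Rightarrow> 'g) \<Rightarrow> ('s \<Rightarrow> 'r) set" where
  "twisted_steinberg G T S i q =
     {f. continuous_map (gtop S) (discrete_topology UNIV) f \<and>
         (\<forall>e\<in>gcarrier S. \<forall>z\<in>T. f (tact G S i q z e) = z * f e) \<and>
         compactin (gtop G) ((gtop G) closure_of (q ` {e \<in> gcarrier S. f e \<noteq> 0})) \<and>
         (\<forall>e. e \<notin> gcarrier S \<longrightarrow> f e = 0)}"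

definition conv_summand ::
  "('s, 'c) tgroupoid_scheme \<Rightarrow> ('g \<Rightarrow> 's) \<Rightarrow> ('s \<Rightarrow> 'r::comm_ring_1) \<Rightarrow> ('s \<Rightarrow> 'r) \<Rightarrow> 's \<Rightarrow> 'g \<Rightarrow> 'r" where
  "conv_summand S P f g e \<gamma> = f (gmult S e (P \<gamma>)) * g (ginv S (P \<gamma>))"

definition conv_support ::
  "('g, 'b) tgroupoid_scheme \<Rightarrow> ('s, 'c) tgroupoid_scheme \<Rightarrow> ('s \<Rightarrow> 'g) \<Rightarrow> ('g \<Rightarrow> 's) \<Rightarrow>
     ('s \<Rightarrow> 'r::comm_ring_1) \<Rightarrow> ('s \<Rightarrow> 'r) \<Rightarrow> 's \<Rightarrow> 'g set" where
  "conv_support G S q P f g e =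
     {\<gamma> \<in> gcarrier G. gr G \<gamma> = gs G (q e) \<and> conv_summand S P f g e \<gamma> \<noteq> 0}"

definition tconv ::
  "('g, 'b) tgroupoid_scheme \<Rightarrow> ('s, 'c) tgroupoid_scheme \<Rightarrow> ('s \<Rightarrow> 'g) \<Rightarrow> ('g \<Rightarrow> 's) \<Rightarrow>
     ('s \<Rightarrow> 'r::comm_ring_1) \<Rightarrow> ('s \<Rightarrow> 'r) \<Rightarrow> 's \<Rightarrow> 'r" where
  "tconv G S q P f g = (\<lambda>e. if e \<in> gcarrier S
       then (\<Sum>\<gamma>\<in>conv_support G S q P f g e. conv_summand S P f g e \<gamma>) else 0)"

definition tstar ::
  "('s, 'c) tgroupoid_scheme \<Rightarrow> ('r \<Rightarrow> 'r) \<Rightarrow> ('s \<Rightarrow> 'r::comm_ring_1) \<Rightarrow> 's \<Rightarrow> 'r" where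
  "tstar S bar f = (\<lambda>e. if e \<in> gcarrier S then bar (f (ginv S e)) else 0)"

definition R_algebra_on :: "('s \<Rightarrow> 'r::comm_ring_1) set \<Rightarrow> (('s \<Rightarrow> 'r) \<Rightarrow> ('s \<Rightarrow> 'r) \<Rightarrow> ('s \<Rightarrow> 'r)) \<Rightarrow> bool" where
  "R_algebra_on A m \<longleftrightarrow>
     (\<lambda>_. 0) \<in> A \<and>
     (\<forall>f\<in>A. \<forall>g\<in>A. (\<lambda>e. f e + g e) \<in> A) \<and>
     (\<forall>c. \<forall>f\<in>A. (\<lambda>e. c * f e) \<in> A) \<and>
     (\<forall>f\<in>A. \<forall>g\<in>A. m f g \<in> A) \<and>
     (\<forall>f\<in>A. \<forall>g\<in>A. \<forall>h\<in>A. m (m f g) h = m f (m g h)) \<and>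
     (\<forall>f\<in>A. \<forall>g\<in>A. \<forall>h\<in>A. m f (\<lambda>e. g e + h e) = (\<lambda>e. m f g e + m f h e)) \<and>
     (\<forall>f\<in>A. \<forall>g\<in>A. \<forall>h\<in>A. m (\<lambda>e. f e + g e) h = (\<lambda>e. m f h e + m g h e)) \<and>
     (\<forall>c. \<forall>f\<in>A. \<forall>g\<in>A. m (\<lambda>e. c * f e) g = (\<lambda>e. c * m f g e) \<and>
                         m f (\<lambda>e. c * g e) = (\<lambda>e. c * m f g e))"

definition ring_involution :: "('r::comm_ring_1 \<Rightarrow> 'r) \<Rightarrow> bool" where
  "ring_involution bar \<longleftrightarrow> (\<forall>a b. bar (a + b) = bar a + bar b) \<and>
     (\<forall>a b. bar (a * b) = bar b * bar a) \<and> bar 1 = 1 \<and> (\<forall>a. bar (bar a) = a)"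

definition T_inverse_involution :: "'r::comm_ring_1 set \<Rightarrow> ('r \<Rightarrow> 'r) \<Rightarrow> bool" where
  "T_inverse_involution T bar \<longleftrightarrow> ring_involution bar \<and> (\<forall>z\<in>T. z * bar z = 1)"

definition star_algebra_on ::
  "('s \<Rightarrow> 'r::comm_ring_1) set \<Rightarrow> (('s \<Rightarrow> 'r) \<Rightarrow> ('s \<Rightarrow> 'r) \<Rightarrow> ('s \<Rightarrow> 'r)) \<Rightarrow>
     (('s \<Rightarrow> 'r) \<Rightarrow> ('s \<Rightarrow> 'r)) \<Rightarrow> ('r \<Rightarrow> 'r) \<Rightarrow> bool" where
  "star_algebra_on A m st bar \<longleftrightarrow> R_algebra_on A m \<and>
     (\<forall>f\<in>A. st f \<in> A) \<and>
     (\<forall>f\<in>A. st (st f) = f) \<and>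
     (\<forall>f\<in>A. \<forall>g\<in>A. st (\<lambda>e. f e + g e) = (\<lambda>e. st f e + st g e)) \<and>
     (\<forall>c. \<forall>f\<in>A. st (\<lambda>e. c * f e) = (\<lambda>e. bar c * st f e)) \<and>
     (\<forall>f\<in>A. \<forall>g\<in>A. st (m f g) = m (st g) (st f))"

end

theory Submission
  imports Defs
begin

locale grpd =
  fixes G :: "('a, 'b) tgroupoid_scheme"
  assumes grp: "groupoid G"
begin

abbreviation "C \<equiv> gcarrier G"
abbreviation "r \<equiv> gr G"
abbreviation "s \<equiv> gs G"
abbreviation "m \<equiv> gmult G"
abbreviation "iv \<equiv> ginv G"

lemma r_in[simp]: "a \<in> C \<Longrightarrow> r a \<in> C" and s_in[simp]: "a \<in> C \<Longrightarrow> s a \<in> C"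
  and iv_in[simp]: "a \<in> C \<Longrightarrow> iv a \<in> C"
  using grp unfolding groupoid_def by auto

lemma rr[simp]: "a \<in> C \<Longrightarrow> r (r a) = r a" and sr[simp]: "a \<in> C \<Longrightarrow> s (r a) = r a"
  and rs[simp]: "a \<in> C \<Longrightarrow> r (s a) = s a" and ss[simp]: "a \<in> C \<Longrightarrow> s (s a) = s a"
  using grp unfolding groupoid_def by auto

lemma m_in[simp]: "a \<in> C \<Longrightarrow> b \<in> C \<Longrightarrow> s a = r b \<Longrightarrow> m a b \<in> C"
  and r_m[simp]: "a \<in> C \<Longrightarrow> b \<in> C \<Longrightarrow> s a = r b \<Longrightarrow> r (m a b) = r a"
  and s_m[simp]: "a \<in> C \<Longrightarrow> b \<in> C \<Longrightarrow> s a = r b \<Longrightarrow> s (m a b) = s b"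
  using grp unfolding groupoid_def composable_def by auto

lemma assoc: "a \<in> C \<Longrightarrow> b \<in> C \<Longrightarrow> c \<in> C \<Longrightarrow> s a = r b \<Longrightarrow> s b = r c \<Longrightarrow>
   m (m a b) c = m a (m b c)"
  using grp unfolding groupoid_def by blast

lemma lunit[simp]: "a \<in> C \<Longrightarrow> m (r a) a = a" and runit[simp]: "a \<in> C \<Longrightarrow> m a (s a) = a"
  using grp unfolding groupoid_def by auto

lemma r_iv[simp]: "a \<in> C \<Longrightarrow> r (iv a) = s a" and s_iv[simp]: "a \<in> C \<Longrightarrow> s (iv a) = r a"
  and m_iv[simp]: "a \<in> C \<Longrightarrow> m a (iv a) = r a" and iv_m[simp]: "a \<in> C \<Longrightarrow> m (iv a) a = s a"
  using grp unfolding groupoid_def by auto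

lemma lcancel: assumes a: "a \<in> C" and b: "b \<in> C" and c: "c \<in> C" and ab: "s a = r b"
  and ac: "s a = r c" and e: "m a b = m a c"
  shows "b = c"
proof -
  have "b = m (m (iv a) a) b" using a b ab by simp
  also have "\<dots> = m (iv a) (m a b)" by (rule assoc) (use a b ab in auto)
  also have "\<dots> = m (iv a) (m a c)" using e by simp
  also have "\<dots> = m (m (iv a) a) c" by (rule assoc[symmetric]) (use a c ac in auto)
  also have "\<dots> = c" using a c ac by simp
  finally show ?thesis .
qed

lemma rcancel: assumes a: "a \<in> C" and b: "b \<in> C" and c: "c \<in> C" and ab: "s b = r a"
  and ac: "s c = r a" and e: "m b a = m c a"
  shows "b = c"
proof -
  have "b = m b (m a (iv a))" using a b ab by (simp add: ab[symmetric])
  also have "\<dots> = m (m b a) (iv a)" by (rule assoc[symmetric]) (use a b ab in auto)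
  also have "\<dots> = m (m c a) (iv a)" using e by simp
  also have "\<dots> = m c (m a (iv a))" by (rule assoc) (use a c ac in auto)
  also have "\<dots> = c" using a c ac by (simp add: ac[symmetric])
  finally show ?thesis .
qed

lemma iv_iv[simp]: "a \<in> C \<Longrightarrow> iv (iv a) = a"
  by (rule lcancel[of "iv a"]) auto

lemma iv_unique: assumes "a \<in> C" "b \<in> C" "s a = r b" "m a b = r a" shows "b = iv a"
  by (rule lcancel[of a]) (use assms in auto)

lemma iv_mult: assumes a: "a \<in> C" and b: "b \<in> C" and ab: "s a = r b"
  shows "iv (m a b) = m (iv b) (iv a)"
proof -
  have "m (m a b) (m (iv b) (iv a)) = m a (m b (m (iv b) (iv a)))"
    by (rule assoc) (use a b ab in auto)
  also have "\<dots> = m a (m (m b (iv b)) (iv a))"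
    using a b ab by (simp add: assoc[symmetric])
  also have "\<dots> = m a (m (s a) (iv a))" using b ab by simp
  also have "\<dots> = r (m a b)" using a b ab 
    by (metis lunit m_iv iv_in r_iv r_m)
  finally have e: "m (m a b) (m (iv b) (iv a)) = r (m a b)" .
  have "m (iv b) (iv a) = iv (m a b)"
    using iv_unique[of "m a b" "m (iv b) (iv a)"] a b ab e by simp
  then show ?thesis by simp
qed

lemma gunits_iff: "u \<in> gunits G \<longleftrightarrow> u \<in> C \<and> r u = u"
  unfolding gunits_def
proof
  assume "u \<in> r ` C" then show "u \<in> C \<and> r u = u" by auto
next
  assume "u \<in> C \<and> r u = u" then show "u \<in> r ` C" by (auto intro: rev_image_eqI[of u])
qed

lemma unit_s: "u \<in> gunits G \<Longrightarrow> s u = u"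
  unfolding gunits_def by auto

lemma unit_m: "u \<in> gunits G \<Longrightarrow> a \<in> C \<Longrightarrow> u = r a \<Longrightarrow> m u a = a" by simp

lemma r_unit[simp]: "a \<in> C \<Longrightarrow> r a \<in> gunits G" and s_unit[simp]: "a \<in> C \<Longrightarrow> s a \<in> gunits G"
  by (auto simp: gunits_iff)

lemma units_sub: "gunits G \<subseteq> C" by (auto simp: gunits_iff)

end


locale twist =
  fixes G :: "'g tgroupoid" and T :: "'r::comm_ring_1 set" and S :: "'s tgroupoid"
    and i :: "'g \<times> 'r \<Rightarrow> 's" and q :: "'s \<Rightarrow> 'g" and P :: "'g \<Rightarrow> 's"
  assumes ample: "ample_groupoid G"
    and US: "unit_subgroup T"
    and DT: "discrete_twist G T S i q"
    and CGS: "continuous_global_section G S q P"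

lemma (in twist) grpG: "groupoid G"
proof -
  have "topological_groupoid G" using ample unfolding ample_groupoid_def lch_groupoid_def by simp
  then show ?thesis unfolding topological_groupoid_def by simp
qed
lemma (in twist) grpS: "groupoid S"
proof -
  have "topological_groupoid S" using DT unfolding discrete_twist_def by (elim conjE) assumption
  then show ?thesis unfolding topological_groupoid_def by simp
qed

sublocale twist \<subseteq> G: grpd G by (rule grpd.intro, rule grpG)
sublocale twist \<subseteq> S: grpd S by (rule grpd.intro, rule grpS)

context twist
begin

abbreviation "UG \<equiv> gunits G"
abbreviation "US \<equiv> gunits S"

lemma topG: "topological_groupoid G" and HausG: "Hausdorff_space (gtop G)"
  using ample unfolding ample_groupoid_def lch_groupoid_def by simp_all
lemma topS: "topological_groupoid S" and HausS: "Hausdorff_space (gtop S)"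
  using DT unfolding discrete_twist_def by simp_all
lemma topspaceG[simp]: "topspace (gtop G) = G.C" using topG unfolding topological_groupoid_def by simp
lemma topspaceS[simp]: "topspace (gtop S) = S.C" using topS unfolding topological_groupoid_def by simp

lemma unitsS: "US = i ` (UG \<times> {1})" using DT unfolding discrete_twist_def by (elim conjE) assumption
lemma i_hom: "groupoid_hom (trivial_bundle G T) S i" using DT unfolding discrete_twist_def by (elim conjE) assumption
lemma q_hom: "groupoid_hom S G q" using DT unfolding discrete_twist_def by (elim conjE) assumption
lemma q_homeo: "homeomorphic_map (subtopology (gtop S) US) (subtopology (gtop G) UG) q"
  using DT unfolding discrete_twist_def by (elim conjE) assumption
lemma fiber0: "\<forall>x\<in>UG. i ` ({x} \<times> T) = {e \<in> S.C. q e = x}"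
  using DT unfolding discrete_twist_def by (elim conjE) assumption
lemma fiber: "x \<in> UG \<Longrightarrow> i ` ({x} \<times> T) = {e \<in> S.C. q e = x}"
  using fiber0 by blast
lemma inj_i: "inj_on i (UG \<times> T)" using DT unfolding discrete_twist_def by (elim conjE) assumption
lemma central0: "\<forall>e\<in>S.C. \<forall>z\<in>T.
   S.m (i (G.r (q e), z)) e = S.m e (i (G.s (q e), z))"
  using DT unfolding discrete_twist_def by (elim conjE) assumption
lemma central: "e \<in> S.C \<Longrightarrow> z \<in> T \<Longrightarrow>
   S.m (i (G.r (q e), z)) e = S.m e (i (G.s (q e), z))"
  using central0 by blast

lemma one_T[simp]: "1 \<in> T" using US unit_subgroup_def by blast
lemma mult_T[simp]: "z \<in> T \<Longrightarrow> w \<in> T \<Longrightarrow> z * w \<in> T" using US unit_subgroup_def by blast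

definition tinv :: "'r \<Rightarrow> 'r" where "tinv z = (SOME w. w \<in> T \<and> z * w = 1)"
lemma tinv: "z \<in> T \<Longrightarrow> tinv z \<in> T \<and> z * tinv z = 1"
proof -
  assume z: "z \<in> T"
  then have "\<exists>w. w \<in> T \<and> z * w = 1" using US unfolding unit_subgroup_def by blast
  then show ?thesis unfolding tinv_def by (rule someI_ex)
qed
lemma tinv_in[simp]: "z \<in> T \<Longrightarrow> tinv z \<in> T" and tinv_r[simp]: "z \<in> T \<Longrightarrow> z * tinv z = 1"
  and tinv_l[simp]: "z \<in> T \<Longrightarrow> tinv z * z = 1"
  using tinv by (auto simp: mult.commute)

lemma i_in[simp]: "x \<in> UG \<Longrightarrow> z \<in> T \<Longrightarrow> i (x, z) \<in> S.C"
  using i_hom unfolding groupoid_hom_def trivial_bundle_def by auto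

lemma q_i[simp]: "x \<in> UG \<Longrightarrow> z \<in> T \<Longrightarrow> q (i (x, z)) = x"
  using fiber[of x] by auto

lemma i_mult: "x \<in> UG \<Longrightarrow> z \<in> T \<Longrightarrow> w \<in> T \<Longrightarrow>
   S.s (i (x, z)) = S.r (i (x, w)) \<and> S.m (i (x, z)) (i (x, w)) = i (x, z * w)"
proof -
  assume a: "x \<in> UG" "z \<in> T" "w \<in> T"
  have "((x, z), (x, w)) \<in> composable (trivial_bundle G T)"
    using a by (auto simp: composable_def trivial_bundle_def)
  then show ?thesis using i_hom unfolding groupoid_hom_def
    by (auto simp: composable_def trivial_bundle_def)
qed

lemma q_in[simp]: "e \<in> S.C \<Longrightarrow> q e \<in> G.C"
  using q_hom unfolding groupoid_hom_def by auto

lemma q_mult: "a \<in> S.C \<Longrightarrow> b \<in> S.C \<Longrightarrow> S.s a = S.r b \<Longrightarrow>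
   G.s (q a) = G.r (q b) \<and> q (S.m a b) = G.m (q a) (q b)"
  using q_hom unfolding groupoid_hom_def composable_def by auto

lemma q_units: "q ` US = UG" and q_inj_units: "inj_on q US"
proof -
  have tS: "topspace (subtopology (gtop S) US) = US" using S.units_sub by auto
  have tG: "topspace (subtopology (gtop G) UG) = UG" using G.units_sub by auto
  show "q ` US = UG" using homeomorphic_imp_surjective_map[OF q_homeo] tS tG by simp
  show "inj_on q US" using homeomorphic_imp_injective_map[OF q_homeo] tS by simp
qed

lemma q_unit[simp]: "u \<in> US \<Longrightarrow> q u \<in> UG" using q_units by auto

lemma i_unit[simp]: "x \<in> UG \<Longrightarrow> i (x, 1) \<in> US" using unitsS by auto

lemma unit_over: "u \<in> US \<Longrightarrow> q u = x \<Longrightarrow> u = i (x, 1)"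
proof -
  assume a: "u \<in> US" "q u = x"
  then have x: "x \<in> UG" by auto
  show ?thesis using inj_onD[OF q_inj_units, of u "i (x,1)"] a x by simp
qed

lemma q_r[simp]: "e \<in> S.C \<Longrightarrow> q (S.r e) = G.r (q e)"
proof -
  assume e: "e \<in> S.C"
  have "q (S.r e) = G.m (q e) (q (S.iv e))" using q_mult[of e "S.iv e"] e by simp
  moreover have "q (S.r e) \<in> UG" using e by simp
  moreover have "G.r (G.m (q e) (q (S.iv e))) = G.r (q e)" using q_mult[of e "S.iv e"] e by simp
  ultimately show ?thesis using G.gunits_iff by auto
qed

lemma q_s[simp]: "e \<in> S.C \<Longrightarrow> q (S.s e) = G.s (q e)"
proof -
  assume e: "e \<in> S.C"
  have "q (S.s e) = G.m (q (S.iv e)) (q e)" using q_mult[of "S.iv e" e] e by simp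
  moreover have "q (S.s e) \<in> UG" using e by simp
  moreover have "G.s (G.m (q (S.iv e)) (q e)) = G.s (q e)" using q_mult[of "S.iv e" e] e by simp
  ultimately show ?thesis using G.unit_s by auto
qed

lemma q_iv[simp]: "e \<in> S.C \<Longrightarrow> q (S.iv e) = G.iv (q e)"
proof -
  assume e: "e \<in> S.C"
  have "G.m (q e) (q (S.iv e)) = G.r (q e)" using q_mult[of e "S.iv e"] e by simp
  moreover have "G.s (q e) = G.r (q (S.iv e))" using q_mult[of e "S.iv e"] e by simp
  ultimately show ?thesis using G.iv_unique[of "q e" "q (S.iv e)"] e by simp
qed

lemma Sr_eq: "e \<in> S.C \<Longrightarrow> S.r e = i (G.r (q e), 1)"
  by (rule unit_over) auto
lemma Ss_eq: "e \<in> S.C \<Longrightarrow> S.s e = i (G.s (q e), 1)"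
  by (rule unit_over) auto

lemma S_comp_iff: "a \<in> S.C \<Longrightarrow> b \<in> S.C \<Longrightarrow> S.s a = S.r b \<longleftrightarrow> G.s (q a) = G.r (q b)"
proof
  assume "a \<in> S.C" "b \<in> S.C" "S.s a = S.r b" then show "G.s (q a) = G.r (q b)" using q_mult by blast
next
  assume "a \<in> S.C" "b \<in> S.C" "G.s (q a) = G.r (q b)" then show "S.s a = S.r b" using Sr_eq Ss_eq by simp
qed

lemma Sr_i[simp]: "x \<in> UG \<Longrightarrow> z \<in> T \<Longrightarrow> S.r (i (x, z)) = i (x, 1)"
  using Sr_eq[of "i (x,z)"] G.gunits_iff by simp
lemma Ss_i[simp]: "x \<in> UG \<Longrightarrow> z \<in> T \<Longrightarrow> S.s (i (x, z)) = i (x, 1)"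
  using Ss_eq[of "i (x,z)"] G.unit_s by simp


abbreviation "ta \<equiv> tact G S i q"

lemma ta_def: "ta z e = S.m (i (G.r (q e), z)) e" by (simp add: tact_def)

lemma ta_comp: "e \<in> S.C \<Longrightarrow> z \<in> T \<Longrightarrow> S.s (i (G.r (q e), z)) = S.r e"
  using Sr_eq[of e] by simp

lemma ta_in[simp]: "e \<in> S.C \<Longrightarrow> z \<in> T \<Longrightarrow> ta z e \<in> S.C"
  unfolding ta_def by (rule S.m_in) (use ta_comp[of e z] in auto)

lemma q_ta[simp]: "e \<in> S.C \<Longrightarrow> z \<in> T \<Longrightarrow> q (ta z e) = q e"
  unfolding ta_def using q_mult[of "i (G.r (q e), z)" e] ta_comp[of e z] by simp

lemma Sr_ta[simp]: "e \<in> S.C \<Longrightarrow> z \<in> T \<Longrightarrow> S.r (ta z e) = S.r e"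
  using Sr_eq[of "ta z e"] Sr_eq[of e] by simp
lemma Ss_ta[simp]: "e \<in> S.C \<Longrightarrow> z \<in> T \<Longrightarrow> S.s (ta z e) = S.s e"
  using Ss_eq[of "ta z e"] Ss_eq[of e] by simp

lemma ta_1[simp]: "e \<in> S.C \<Longrightarrow> ta 1 e = e"
  unfolding ta_def using Sr_eq[of e] by (metis S.lunit)

lemma ta_ta: "e \<in> S.C \<Longrightarrow> z \<in> T \<Longrightarrow> w \<in> T \<Longrightarrow> ta z (ta w e) = ta (z * w) e"
proof -
  assume a: "e \<in> S.C" "z \<in> T" "w \<in> T"
  let ?x = "G.r (q e)"
  have x: "?x \<in> UG" using a by simp
  have "ta z (ta w e) = S.m (i (G.r (q (ta w e)), z)) (ta w e)" by (rule ta_def)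
  also have "\<dots> = S.m (i (?x, z)) (ta w e)" using a by simp
  also have "\<dots> = S.m (i (?x, z)) (S.m (i (?x, w)) e)" by (simp add: ta_def)
  also have "\<dots> = S.m (S.m (i (?x, z)) (i (?x, w))) e"
    by (rule S.assoc[symmetric]) (use a x i_mult[of ?x z w] ta_comp[of e w] in auto)
  also have "\<dots> = ta (z * w) e" using i_mult[of ?x z w] a x by (simp add: ta_def)
  finally show ?thesis .
qed

lemma ta_right: "e \<in> S.C \<Longrightarrow> z \<in> T \<Longrightarrow> ta z e = S.m e (i (G.s (q e), z))"
  unfolding ta_def by (rule central)

lemma ta_mult_l: assumes a: "a \<in> S.C" and b: "b \<in> S.C" and ab: "S.s a = S.r b" and z: "z \<in> T"
  shows "S.m (ta z a) b = ta z (S.m a b)"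
proof -
  have qab: "G.r (q (S.m a b)) = G.r (q a)" using q_mult[OF a b ab] a b ab
    by (metis G.r_m q_in)
  have "S.m (ta z a) b = S.m (S.m (i (G.r (q a), z)) a) b" by (simp add: ta_def)
  also have "\<dots> = S.m (i (G.r (q a), z)) (S.m a b)"
    by (rule S.assoc) (use a b ab z ta_comp[of a z] in auto)
  also have "\<dots> = ta z (S.m a b)" by (simp add: ta_def qab)
  finally show ?thesis .
qed

lemma ta_mult_r: assumes a: "a \<in> S.C" and b: "b \<in> S.C" and ab: "S.s a = S.r b" and z: "z \<in> T"
  shows "S.m a (ta z b) = ta z (S.m a b)"
proof -
  have gab: "G.s (q a) = G.r (q b)" using q_mult[OF a b ab] by simp
  have qab: "G.r (q (S.m a b)) = G.r (q a)" using q_mult[OF a b ab] a b ab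
    by (metis G.r_m q_in)
  have c1: "S.s a = S.r (i (G.s (q a), z))" using a z by (simp add: Ss_eq)
  have "S.m a (ta z b) = S.m a (S.m (i (G.r (q b), z)) b)" by (simp add: ta_def)
  also have "\<dots> = S.m a (S.m (i (G.s (q a), z)) b)" by (simp add: gab)
  also have "\<dots> = S.m (S.m a (i (G.s (q a), z))) b"
    by (rule S.assoc[symmetric]) (use a b ab z ta_comp[of b z] gab c1 in auto)
  also have "\<dots> = S.m (ta z a) b" using ta_right[OF a z] by simp
  also have "\<dots> = ta z (S.m a b)" by (rule ta_mult_l[OF a b ab z])
  finally show ?thesis .
qed

lemma ta_iv: assumes e: "e \<in> S.C" and z: "z \<in> T"
  shows "S.iv (ta z e) = ta (tinv z) (S.iv e)"
proof -
  have "S.m (ta z e) (ta (tinv z) (S.iv e)) = ta (tinv z) (S.m (ta z e) (S.iv e))"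
    by (rule ta_mult_r) (use e z in auto)
  also have "\<dots> = ta (tinv z) (ta z (S.m e (S.iv e)))"
    using ta_mult_l[of e "S.iv e" z] e z by simp
  also have "\<dots> = S.r (ta z e)" using e z by (simp add: ta_ta)
  finally have h: "S.m (ta z e) (ta (tinv z) (S.iv e)) = S.r (ta z e)" .
  show ?thesis
    by (rule S.iv_unique[symmetric]) (use e z h in auto)
qed

lemma orbit: assumes e: "e \<in> S.C" and e': "e' \<in> S.C" and qe: "q e = q e'"
  shows "\<exists>z\<in>T. e' = ta z e"
proof -
  have c: "S.s e' = S.r (S.iv e)" using e e' qe by (simp add: Ss_eq)
  have d: "S.m e' (S.iv e) \<in> S.C" using c e e' by simp
  have qd: "q (S.m e' (S.iv e)) = G.r (q e)"
    using q_mult[of e' "S.iv e"] c e e' qe by simp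
  have "S.m e' (S.iv e) \<in> {x \<in> S.C. q x = G.r (q e)}" using d qd by simp
  then obtain z where z: "z \<in> T" and dz: "S.m e' (S.iv e) = i (G.r (q e), z)"
    using fiber[of "G.r (q e)"] e by auto
  have "ta z e = S.m (S.m e' (S.iv e)) e" by (simp add: ta_def dz)
  also have "\<dots> = S.m e' (S.m (S.iv e) e)" by (rule S.assoc) (use e e' c in auto)
  also have "\<dots> = e'" using e e' Ss_eq[of e] Ss_eq[of e'] qe by (metis S.iv_m S.runit)
  finally show ?thesis using z by auto
qed

lemma ta_free: assumes e: "e \<in> S.C" and z: "z \<in> T" and w: "w \<in> T" and h: "ta z e = ta w e"
  shows "z = w"
proof -
  have "i (G.r (q e), z) = i (G.r (q e), w)"
    by (rule S.rcancel[of e]) (use e z w h ta_comp in \<open>auto simp: ta_def\<close>)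
  then show ?thesis using inj_onD[OF inj_i] e z w by auto
qed

abbreviation "A \<equiv> twisted_steinberg G T S i q"

lemma A_cont: "f \<in> A \<Longrightarrow> continuous_map (gtop S) (discrete_topology UNIV) f"
  and A_eqv: "f \<in> A \<Longrightarrow> e \<in> S.C \<Longrightarrow> z \<in> T \<Longrightarrow> f (ta z e) = z * f e"
  and A_cpt: "f \<in> A \<Longrightarrow> compactin (gtop G) ((gtop G) closure_of (q ` {e \<in> S.C. f e \<noteq> 0}))"
  and A_zero: "f \<in> A \<Longrightarrow> e \<notin> S.C \<Longrightarrow> f e = 0"
  unfolding twisted_steinberg_def by auto

lemma Phi_inv: assumes f: "f \<in> A" and g: "g \<in> A" and a: "a \<in> S.C" and c: "c \<in> S.C"
  and ac: "S.r a = S.r c" and z: "z \<in> T"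
  shows "f (ta z a) * g (S.m (S.iv (ta z a)) c) = f a * g (S.m (S.iv a) c)"
proof -
  have c1: "S.s (S.iv a) = S.r c" using a ac by simp
  have "S.m (S.iv (ta z a)) c = ta (tinv z) (S.m (S.iv a) c)"
    using ta_iv[OF a z] ta_mult_l[of "S.iv a" c "tinv z"] a c c1 z by simp
  then have "f (ta z a) * g (S.m (S.iv (ta z a)) c) = (z * f a) * (tinv z * g (S.m (S.iv a) c))"
    using A_eqv[OF f a z] A_eqv[OF g, of "S.m (S.iv a) c" "tinv z"] a c c1 z by simp
  also have "\<dots> = (z * tinv z) * (f a * g (S.m (S.iv a) c))" by (simp add: algebra_simps)
  finally show ?thesis using z by simp
qed

lemma Phi_inv2: assumes f: "f \<in> A" and g: "g \<in> A" and a: "a \<in> S.C" and b: "b \<in> S.C"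
  and c: "c \<in> S.C" and ab: "q a = q b" and ac: "S.r a = S.r c"
  shows "f b * g (S.m (S.iv b) c) = f a * g (S.m (S.iv a) c)"
proof -
  obtain z where z: "z \<in> T" "b = ta z a" using orbit[OF a b ab] by auto
  show ?thesis using Phi_inv[OF f g a c ac z(1)] z(2) by simp
qed

end

lemma tg_cont_r:
  fixes G :: "('a, 'b) tgroupoid_scheme"
  assumes tg: "topological_groupoid G"
  shows "continuous_map (gtop G) (gtop G) (gr G)"
    and "continuous_map (gtop G) (gtop G) (gs G)"
    and "continuous_map (gtop G) (gtop G) (ginv G)"
    and "continuous_map (subtopology (prod_topology (gtop G) (gtop G)) (composable G)) (gtop G)
       (\<lambda>(a, b). gmult G a b)"
proof -
  have g: "groupoid G" and tsp: "topspace (gtop G) = gcarrier G"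
    and mc: "continuous_map (subtopology (prod_topology (gtop G) (gtop G)) (composable G)) (gtop G)
       (\<lambda>(a, b). gmult G a b)"
    and ic: "continuous_map (gtop G) (gtop G) (ginv G)"
    using tg unfolding topological_groupoid_def by simp_all
  interpret grpd G by (rule grpd.intro, rule g)
  show "continuous_map (gtop G) (gtop G) (ginv G)" by (rule ic)
  show "continuous_map (subtopology (prod_topology (gtop G) (gtop G)) (composable G)) (gtop G)
       (\<lambda>(a, b). gmult G a b)" by (rule mc)
  have p1: "continuous_map (gtop G) (subtopology (prod_topology (gtop G) (gtop G)) (composable G))
      (\<lambda>a. (a, iv a))"
    by (rule continuous_map_into_subtopology)
       (use ic in \<open>auto simp: tsp composable_def intro!: continuous_map_pairedI\<close>)
  have "continuous_map (gtop G) (gtop G) ((\<lambda>(a, b). gmult G a b) \<circ> (\<lambda>a. (a, iv a)))"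
    by (rule continuous_map_compose[OF p1 mc])
  then show "continuous_map (gtop G) (gtop G) (gr G)"
    by (rule continuous_map_eq) (simp add: tsp)
  have p2: "continuous_map (gtop G) (subtopology (prod_topology (gtop G) (gtop G)) (composable G))
      (\<lambda>a. (iv a, a))"
    by (rule continuous_map_into_subtopology)
       (use ic in \<open>auto simp: tsp composable_def intro!: continuous_map_pairedI\<close>)
  have "continuous_map (gtop G) (gtop G) ((\<lambda>(a, b). gmult G a b) \<circ> (\<lambda>a. (iv a, a)))"
    by (rule continuous_map_compose[OF p2 mc])
  then show "continuous_map (gtop G) (gtop G) (gs G)"
    by (rule continuous_map_eq) (simp add: tsp)
qed

lemma compact_closure_sub:
  assumes "Hausdorff_space X" "compactin X K" "B \<subseteq> K"
  shows "compactin X (X closure_of B)"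
proof -
  have "closedin X K" using assms compactin_imp_closedin by blast
  then have "X closure_of B \<subseteq> K" using assms closure_of_minimal by blast
  then show ?thesis using closed_compactin[OF assms(2)] by simp
qed

context twist
begin

lemma contG: "continuous_map (gtop G) (gtop G) G.r" "continuous_map (gtop G) (gtop G) G.s"
  "continuous_map (gtop G) (gtop G) G.iv"
  "continuous_map (subtopology (prod_topology (gtop G) (gtop G)) (composable G)) (gtop G)
       (\<lambda>(a, b). G.m a b)"
  using tg_cont_r[OF topG] by simp_all

lemma contS: "continuous_map (gtop S) (gtop S) S.r" "continuous_map (gtop S) (gtop S) S.s"
  "continuous_map (gtop S) (gtop S) S.iv"
  "continuous_map (subtopology (prod_topology (gtop S) (gtop S)) (composable S)) (gtop S)
       (\<lambda>(a, b). S.m a b)"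
  using tg_cont_r[OF topS] by simp_all

lemma q_cont: "continuous_map (gtop S) (gtop G) q"
  using DT unfolding discrete_twist_def by (elim conjE) assumption

lemma P_cont: "continuous_map (gtop G) (gtop S) P"
  using CGS unfolding continuous_global_section_def by simp
lemma P_in[simp]: "a \<in> G.C \<Longrightarrow> P a \<in> S.C"
  using continuous_map_image_subset_topspace[OF P_cont] by auto
lemma q_P[simp]: "a \<in> G.C \<Longrightarrow> q (P a) = a"
  using CGS unfolding continuous_global_section_def by simp

lemma ample_basis: "openin (gtop G) U \<Longrightarrow> x \<in> U \<Longrightarrow>
   \<exists>B. compactin (gtop G) B \<and> openin (gtop G) B \<and> bisection G B \<and> x \<in> B \<and> B \<subseteq> U"
  using ample unfolding ample_groupoid_def by blast

definition Gr :: "'g \<Rightarrow> 'g set" where "Gr x = {a \<in> G.C. G.r a = x}"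

lemma Gr_closed: "x \<in> G.C \<Longrightarrow> closedin (gtop G) (Gr x)"
proof -
  assume x: "x \<in> G.C"
  have "closedin (gtop G) {a \<in> topspace (gtop G). G.r a \<in> {x}}"
    by (rule closedin_continuous_map_preimage[OF contG(1)])
       (use x closedin_Hausdorff_singleton[OF HausG, of x] in auto)
  then show ?thesis unfolding Gr_def by simp
qed

lemma bisection_inj: "bisection G B \<Longrightarrow> inj_on G.r B"
proof -
  assume b: "bisection G B"
  then have h: "homeomorphic_map (subtopology (gtop G) B) (subtopology (gtop G) (G.r ` B)) G.r"
    and sub: "B \<subseteq> G.C" unfolding bisection_def by simp_all
  have "inj_on G.r (topspace (subtopology (gtop G) B))" by (rule homeomorphic_imp_injective_map[OF h])
  with sub show ?thesis using sub by (simp add: Int_absorb1)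
qed

lemma finite_GrK: assumes x: "x \<in> G.C" and K: "compactin (gtop G) K"
  shows "finite (Gr x \<inter> K)"
proof -
  let ?Y = "Gr x \<inter> K"
  have "\<forall>y\<in>?Y. \<exists>B. openin (gtop G) B \<and> bisection G B \<and> y \<in> B"
  proof
    fix y assume "y \<in> ?Y"
    then have "y \<in> G.C" unfolding Gr_def by auto
    moreover have "openin (gtop G) G.C" using openin_topspace[of "gtop G"] by simp
    ultimately show "\<exists>B. openin (gtop G) B \<and> bisection G B \<and> y \<in> B"
      using ample_basis[of "G.C" y] by blast
  qed
  from bchoice[OF this] obtain B where B0: "\<forall>y\<in>?Y. openin (gtop G) (B y) \<and> bisection G (B y) \<and> y \<in> B y" ..
  then have B: "\<And>y. y \<in> ?Y \<Longrightarrow> openin (gtop G) (B y) \<and> bisection G (B y) \<and> y \<in> B y"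
    by blast
  let ?O = "G.C - Gr x"
  have Oo: "openin (gtop G) ?O" using Gr_closed[OF x] unfolding closedin_def by simp
  have Ksub: "K \<subseteq> G.C" using compactin_subset_topspace[OF K] by simp
  have cov: "K \<subseteq> \<Union>(insert ?O (B ` ?Y))" using B Ksub by auto
  have op: "\<forall>U\<in>insert ?O (B ` ?Y). openin (gtop G) U" using B Oo by auto
  have K': "\<forall>\<U>. (\<forall>U\<in>\<U>. openin (gtop G) U) \<and> K \<subseteq> \<Union>\<U> \<longrightarrow> (\<exists>F. finite F \<and> F \<subseteq> \<U> \<and> K \<subseteq> \<Union>F)"
    using K unfolding compactin_def by (rule conjunct2)
  from K'[rule_format, OF conjI[OF op cov]] obtain F where
    F: "finite F" "F \<subseteq> insert ?O (B ` ?Y)" "K \<subseteq> \<Union>F" by (elim exE conjE)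
  have "F - {?O} \<subseteq> B ` ?Y" using F by auto
  then obtain Y0 where Y0: "Y0 \<subseteq> ?Y" "finite Y0" "F - {?O} = B ` Y0"
    using finite_subset_image[of "F - {?O}" B ?Y] F(1) by auto
  have "?Y \<subseteq> Y0"
  proof
    fix y assume y: "y \<in> ?Y"
    then have "y \<notin> ?O" by auto
    have "y \<in> \<Union>F" using F(3) y by blast
    then obtain U where U: "U \<in> F" "y \<in> U" by blast
    then have "U \<in> F - {?O}" using \<open>y \<notin> ?O\<close> by blast
    then have "U \<in> B ` Y0" using Y0(3) by simp
    then obtain y0 where y0: "y0 \<in> Y0" "U = B y0" by blast
    have y0Y: "y0 \<in> ?Y" using y0(1) Y0(1) by blast
    have bi: "inj_on G.r (B y0)" using B[OF y0Y] bisection_inj by blast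
    have yb: "y0 \<in> B y0" using B[OF y0Y] by blast
    have "G.r y = G.r y0" using y y0Y unfolding Gr_def by simp
    then have "y = y0" using inj_onD[OF bi] yb U(2) y0(2) by blast
    then show "y \<in> Y0" using y0 by simp
  qed
  then show ?thesis using Y0(2) finite_subset by blast
qed

definition Ksupp :: "('s \<Rightarrow> 'r) \<Rightarrow> 'g set" where
  "Ksupp f = (gtop G) closure_of (q ` {e \<in> S.C. f e \<noteq> 0})"

lemma Ksupp_cpt: "f \<in> A \<Longrightarrow> compactin (gtop G) (Ksupp f)"
  unfolding Ksupp_def by (rule A_cpt)

lemma Ksupp_mem: "e \<in> S.C \<Longrightarrow> f e \<noteq> 0 \<Longrightarrow> q e \<in> Ksupp f"
  unfolding Ksupp_def by (rule closure_of_subset[THEN subsetD]) auto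

lemma Ksupp_sub: "f \<in> A \<Longrightarrow> Ksupp f \<subseteq> G.C"
  using compactin_subset_topspace[OF Ksupp_cpt] by simp

definition Mset :: "'g set \<Rightarrow> 'g set \<Rightarrow> 'g set" where
  "Mset K1 K2 = (\<lambda>(a, b). G.m a b) ` ((K1 \<times> K2) \<inter> composable G)"

lemma Mset_mem: "a \<in> K1 \<Longrightarrow> b \<in> K2 \<Longrightarrow> a \<in> G.C \<Longrightarrow> b \<in> G.C \<Longrightarrow> G.s a = G.r b \<Longrightarrow>
  G.m a b \<in> Mset K1 K2"
  unfolding Mset_def composable_def by (rule rev_image_eqI[of "(a,b)"]) auto

lemma Mset_cpt: assumes K1: "compactin (gtop G) K1" and K2: "compactin (gtop G) K2"
  shows "compactin (gtop G) (Mset K1 K2)"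
proof -
  let ?X = "prod_topology (gtop G) (gtop G)"
  have c1: "compactin ?X (K1 \<times> K2)" using K1 K2 compactin_Times by blast
  have "closedin ?X {p \<in> topspace ?X. (G.s \<circ> fst) p = (G.r \<circ> snd) p}"
    by (rule closedin_continuous_maps_eq[OF HausG continuous_map_compose[OF continuous_map_fst contG(2)]
          continuous_map_compose[OF continuous_map_snd contG(1)]])
  moreover have "{p \<in> topspace ?X. (G.s \<circ> fst) p = (G.r \<circ> snd) p} = composable G"
    by (auto simp: composable_def)
  ultimately have cl: "closedin ?X (composable G)" by simp
  have "compactin ?X ((K1 \<times> K2) \<inter> composable G)"
    using closed_Int_compactin[OF cl c1] by (simp add: Int_commute)
  then have "compactin (subtopology ?X (composable G)) ((K1 \<times> K2) \<inter> composable G)"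
    by (simp add: compactin_subtopology)
  then show ?thesis unfolding Mset_def by (rule image_compactin[OF _ contG(4)])
qed

end

definition fsum :: "('a \<Rightarrow> 'r::comm_ring_1) \<Rightarrow> 'a set \<Rightarrow> 'r" where
  "fsum h X = sum h {x \<in> X. h x \<noteq> 0}"

lemma fsum_eq: assumes "finite F" "F \<subseteq> X" "\<And>x. x \<in> X \<Longrightarrow> x \<notin> F \<Longrightarrow> h x = 0"
  shows "fsum h X = sum h F"
  unfolding fsum_def
  by (rule sum.mono_neutral_right[symmetric]) (use assms in auto)

lemma fsum_cong: "(\<And>x. x \<in> X \<Longrightarrow> h x = h' x) \<Longrightarrow> fsum h X = fsum h' X"
proof -
  assume a: "\<And>x. x \<in> X \<Longrightarrow> h x = h' x"
  then have "{x \<in> X. h x \<noteq> 0} = {x \<in> X. h' x \<noteq> 0}" by auto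
  then show ?thesis unfolding fsum_def using a by (auto intro!: sum.cong)
qed

lemma supp_bij: assumes b: "bij_betw \<phi> X Y" and h: "\<And>x. x \<in> X \<Longrightarrow> h' (\<phi> x) = h x"
  shows "bij_betw \<phi> {x \<in> X. h x \<noteq> 0} {y \<in> Y. h' y \<noteq> 0}"
proof (rule bij_betw_subset[OF b])
  show "{x \<in> X. h x \<noteq> 0} \<subseteq> X" by auto
  show "\<phi> ` {x \<in> X. h x \<noteq> 0} = {y \<in> Y. h' y \<noteq> 0}"
  proof
    show "\<phi> ` {x \<in> X. h x \<noteq> 0} \<subseteq> {y \<in> Y. h' y \<noteq> 0}"
    proof
      fix y assume "y \<in> \<phi> ` {x \<in> X. h x \<noteq> 0}"
      then obtain x where x: "x \<in> X" "h x \<noteq> 0" "y = \<phi> x" by blast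
      have "\<phi> x \<in> Y" using bij_betw_apply[OF b x(1)] .
      then show "y \<in> {y \<in> Y. h' y \<noteq> 0}" using x h[OF x(1)] by simp
    qed
    show "{y \<in> Y. h' y \<noteq> 0} \<subseteq> \<phi> ` {x \<in> X. h x \<noteq> 0}"
    proof
      fix y assume y: "y \<in> {y \<in> Y. h' y \<noteq> 0}"
      then obtain x where "x \<in> X" "y = \<phi> x" using b unfolding bij_betw_def by auto
      then show "y \<in> \<phi> ` {x \<in> X. h x \<noteq> 0}" using y h by auto
    qed
  qed
qed

lemma fsum_reindex: assumes b: "bij_betw \<phi> X Y" and h: "\<And>x. x \<in> X \<Longrightarrow> h' (\<phi> x) = h x"
  shows "fsum h X = fsum h' Y"
proof -
  have bb: "bij_betw \<phi> {x \<in> X. h x \<noteq> 0} {y \<in> Y. h' y \<noteq> 0}"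
    by (rule supp_bij[OF b]) (rule h)
  have "fsum h' Y = sum (\<lambda>x. h' (\<phi> x)) {x \<in> X. h x \<noteq> 0}"
    unfolding fsum_def by (rule sum.reindex_bij_betw[OF bb, symmetric])
  also have "\<dots> = fsum h X" unfolding fsum_def using h by (auto intro!: sum.cong)
  finally show ?thesis by simp
qed

lemma fsum_nz: "fsum h X \<noteq> 0 \<Longrightarrow> \<exists>x\<in>X. h x \<noteq> 0"
proof (rule ccontr)
  assume "fsum h X \<noteq> 0" "\<not> (\<exists>x\<in>X. h x \<noteq> 0)"
  then have "{x \<in> X. h x \<noteq> 0} = {}" by auto
  then show False using \<open>fsum h X \<noteq> 0\<close> unfolding fsum_def by simp
qed

lemma fsum_mult: assumes "finite {x \<in> X. h x \<noteq> 0}"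
  shows "fsum (\<lambda>x. c * h x) X = c * fsum h X"
proof -
  have "fsum (\<lambda>x. c * h x) X = sum (\<lambda>x. c * h x) {x \<in> X. h x \<noteq> 0}"
    by (rule fsum_eq) (use assms in auto)
  then show ?thesis unfolding fsum_def by (simp add: sum_distrib_left)
qed

lemma fsum_add: assumes "finite {x \<in> X. h1 x \<noteq> 0}" "finite {x \<in> X. h2 x \<noteq> 0}"
  shows "fsum (\<lambda>x. h1 x + h2 x) X = fsum h1 X + fsum h2 X"
proof -
  let ?F = "{x \<in> X. h1 x \<noteq> 0} \<union> {x \<in> X. h2 x \<noteq> 0}"
  have fF: "finite ?F" using assms by simp
  have "fsum (\<lambda>x. h1 x + h2 x) X = sum (\<lambda>x. h1 x + h2 x) ?F"
    by (rule fsum_eq[OF fF]) auto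
  moreover have "fsum h1 X = sum h1 ?F" by (rule fsum_eq[OF fF]) auto
  moreover have "fsum h2 X = sum h2 ?F" by (rule fsum_eq[OF fF]) auto
  ultimately show ?thesis by (simp add: sum.distrib)
qed

lemma fsum_morph: assumes "b 0 = 0" "\<And>x y. b (x + y) = b x + b y" "\<And>x. b x = 0 \<Longrightarrow> x = 0"
  shows "b (fsum h X) = fsum (\<lambda>x. b (h x)) X"
proof -
  have "{x \<in> X. b (h x) \<noteq> 0} = {x \<in> X. h x \<noteq> 0}" using assms by auto
  then show ?thesis unfolding fsum_def using sum_comp_morphism[of b h, OF assms(1,2)]
    by (simp add: comp_def)
qed

lemma cont_discrete_lc:
  "continuous_map X (discrete_topology UNIV) f \<longleftrightarrow>
     (\<forall>x\<in>topspace X. \<exists>U. openin X U \<and> x \<in> U \<and> (\<forall>y\<in>U. f y = f x))"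
proof
  assume c: "continuous_map X (discrete_topology UNIV) f"
  show "\<forall>x\<in>topspace X. \<exists>U. openin X U \<and> x \<in> U \<and> (\<forall>y\<in>U. f y = f x)"
  proof
    fix x assume x: "x \<in> topspace X"
    have o: "openin X {y \<in> topspace X. f y \<in> {f x}}"
      by (rule openin_continuous_map_preimage[OF c]) simp
    show "\<exists>U. openin X U \<and> x \<in> U \<and> (\<forall>y\<in>U. f y = f x)"
      by (rule exI[of _ "{y \<in> topspace X. f y \<in> {f x}}"]) (use o x in blast)
  qed
next
  assume h: "\<forall>x\<in>topspace X. \<exists>U. openin X U \<and> x \<in> U \<and> (\<forall>y\<in>U. f y = f x)"
  have "openin X {x \<in> topspace X. f x \<in> V}" for V
  proof (rule openin_subopen[THEN iffD2], rule ballI)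
    fix x assume x: "x \<in> {x \<in> topspace X. f x \<in> V}"
    then have "x \<in> topspace X" by simp
    then obtain U where U: "openin X U" "x \<in> U" "\<forall>y\<in>U. f y = f x" using h by blast
    have "U \<subseteq> topspace X" using openin_subset[OF U(1)] .
    then have "U \<subseteq> {x \<in> topspace X. f x \<in> V}" using x U(3) by auto
    then show "\<exists>T. openin X T \<and> x \<in> T \<and> T \<subseteq> {x \<in> topspace X. f x \<in> V}" using U by blast
  qed
  then show "continuous_map X (discrete_topology UNIV) f"
    unfolding continuous_map by simp
qed

lemma cont_discrete_add:
  assumes "continuous_map X (discrete_topology UNIV) f" "continuous_map X (discrete_topology UNIV) g"
  shows "continuous_map X (discrete_topology UNIV) (\<lambda>x. f x + g x)"
  unfolding cont_discrete_lc
proof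
  fix x assume x: "x \<in> topspace X"
  have a1: "\<forall>x\<in>topspace X. \<exists>U. openin X U \<and> x \<in> U \<and> (\<forall>y\<in>U. f y = f x)"
    using assms(1) unfolding cont_discrete_lc .
  have a2: "\<forall>x\<in>topspace X. \<exists>U. openin X U \<and> x \<in> U \<and> (\<forall>y\<in>U. g y = g x)"
    using assms(2) unfolding cont_discrete_lc .
  obtain U where U: "openin X U" "x \<in> U" "\<forall>y\<in>U. f y = f x" using a1 x by blast
  obtain V where V: "openin X V" "x \<in> V" "\<forall>y\<in>V. g y = g x" using a2 x by blast
  show "\<exists>W. openin X W \<and> x \<in> W \<and> (\<forall>y\<in>W. f y + g y = f x + g x)"
  proof (rule exI[of _ "U \<inter> V"], intro conjI ballI)
    show "openin X (U \<inter> V)" using U(1) V(1) by (rule openin_Int)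
    show "x \<in> U \<inter> V" using U(2) V(2) by blast
    fix y assume "y \<in> U \<inter> V"
    then have "f y = f x" "g y = g x" using U(3) V(3) by blast+
    then show "f y + g y = f x + g x" by simp
  qed
qed

lemma cont_discrete_comp:
  assumes "continuous_map X (discrete_topology UNIV) f"
  shows "continuous_map X (discrete_topology UNIV) (\<lambda>x. b (f x))"
proof -
  have a1: "\<forall>x\<in>topspace X. \<exists>U. openin X U \<and> x \<in> U \<and> (\<forall>y\<in>U. f y = f x)"
    using assms(1) unfolding cont_discrete_lc .
  have "\<forall>x\<in>topspace X. \<exists>U. openin X U \<and> x \<in> U \<and> (\<forall>y\<in>U. b (f y) = b (f x))"
  proof
    fix x assume x: "x \<in> topspace X"
    obtain U where U: "openin X U" "x \<in> U" "\<forall>y\<in>U. f y = f x" using a1 x by blast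
    show "\<exists>U. openin X U \<and> x \<in> U \<and> (\<forall>y\<in>U. b (f y) = b (f x))"
    proof (rule exI[of _ U], intro conjI ballI)
      fix y assume "y \<in> U"
      then have "f y = f x" using U(3) by blast
      then show "b (f y) = b (f x)" by simp
    qed (use U in blast)+
  qed
  then show ?thesis unfolding cont_discrete_lc .
qed

context twist
begin

lemma Gr_bij: assumes a: "a \<in> G.C" shows "bij_betw (G.m a) (Gr (G.s a)) (Gr (G.r a))"
proof (rule bij_betw_byWitness[where f'="G.m (G.iv a)"])
  show "\<forall>x\<in>Gr (G.s a). G.m (G.iv a) (G.m a x) = x"
  proof
    fix x assume x: "x \<in> Gr (G.s a)"
    have xx: "x \<in> G.C" "G.r x = G.s a" using x by (auto simp: Gr_def)
    have "G.m (G.iv a) (G.m a x) = G.m (G.m (G.iv a) a) x"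
      using a xx by (intro G.assoc[symmetric]) auto
    also have "\<dots> = G.m (G.s a) x" using a by simp
    also have "\<dots> = x" using G.lunit[OF xx(1)] xx(2) by simp
    finally show "G.m (G.iv a) (G.m a x) = x" .
  qed
  show "\<forall>y\<in>Gr (G.r a). G.m a (G.m (G.iv a) y) = y"
  proof
    fix x assume x: "x \<in> Gr (G.r a)"
    have xx: "x \<in> G.C" "G.r x = G.r a" using x by (auto simp: Gr_def)
    have "G.m a (G.m (G.iv a) x) = G.m (G.m a (G.iv a)) x"
      using a xx by (intro G.assoc[symmetric]) auto
    also have "\<dots> = G.m (G.r a) x" using a by simp
    also have "\<dots> = x" using G.lunit[OF xx(1)] xx(2) by simp
    finally show "G.m a (G.m (G.iv a) x) = x" .
  qed
  show "G.m a ` Gr (G.s a) \<subseteq> Gr (G.r a)" using a by (auto simp: Gr_def)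
  show "G.m (G.iv a) ` Gr (G.r a) \<subseteq> Gr (G.s a)" using a by (auto simp: Gr_def)
qed

lemma Gr_in: "\<alpha> \<in> Gr x \<Longrightarrow> \<alpha> \<in> G.C" and Gr_r: "\<alpha> \<in> Gr x \<Longrightarrow> G.r \<alpha> = x"
  unfolding Gr_def by auto

definition conv2 :: "('s \<Rightarrow> 'r) \<Rightarrow> ('s \<Rightarrow> 'r) \<Rightarrow> 's \<Rightarrow> 'r" where
  "conv2 f g e = (if e \<in> S.C then fsum (\<lambda>\<alpha>. f (P \<alpha>) * g (S.m (S.iv (P \<alpha>)) e)) (Gr (G.r (q e))) else 0)"

lemma Sr_P: "\<alpha> \<in> Gr (G.r (q e)) \<Longrightarrow> e \<in> S.C \<Longrightarrow> S.r (P \<alpha>) = S.r e"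
  using Sr_eq[of "P \<alpha>"] Sr_eq[of e] by (simp add: Gr_def)

lemma sec: assumes f: "f \<in> A" and g: "g \<in> A" and e: "e \<in> S.C"
  and \<sigma>: "\<And>\<alpha>. \<alpha> \<in> Gr (G.r (q e)) \<Longrightarrow> \<sigma> \<alpha> \<in> S.C \<and> q (\<sigma> \<alpha>) = \<alpha>"
  shows "conv2 f g e = fsum (\<lambda>\<alpha>. f (\<sigma> \<alpha>) * g (S.m (S.iv (\<sigma> \<alpha>)) e)) (Gr (G.r (q e)))"
  unfolding conv2_def using e
proof (simp, intro fsum_cong)
  fix \<alpha> assume a: "\<alpha> \<in> Gr (G.r (q e))"
  then have aC: "\<alpha> \<in> G.C" by (rule Gr_in)
  show "f (P \<alpha>) * g (S.m (S.iv (P \<alpha>)) e) = f (\<sigma> \<alpha>) * g (S.m (S.iv (\<sigma> \<alpha>)) e)"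
    using Phi_inv2[OF f g, of "P \<alpha>" "\<sigma> \<alpha>" e] \<sigma>[OF a] aC e Sr_P[OF a e] by simp
qed

lemma supp_fin: assumes f: "f \<in> A" and x: "x \<in> G.C"
  and \<sigma>: "\<And>\<alpha>. \<alpha> \<in> Gr x \<Longrightarrow> \<sigma> \<alpha> \<in> S.C \<and> q (\<sigma> \<alpha>) = \<alpha>"
  shows "finite {\<alpha> \<in> Gr x. f (\<sigma> \<alpha>) * h \<alpha> \<noteq> 0}"
proof -
  have "{\<alpha> \<in> Gr x. f (\<sigma> \<alpha>) * h \<alpha> \<noteq> 0} \<subseteq> Gr x \<inter> Ksupp f"
  proof
    fix \<alpha> assume a: "\<alpha> \<in> {\<alpha> \<in> Gr x. f (\<sigma> \<alpha>) * h \<alpha> \<noteq> 0}"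
    then have "f (\<sigma> \<alpha>) \<noteq> 0" by auto
    then have "q (\<sigma> \<alpha>) \<in> Ksupp f" using Ksupp_mem \<sigma> a by blast
    then show "\<alpha> \<in> Gr x \<inter> Ksupp f" using \<sigma> a by auto
  qed
  then show ?thesis using finite_GrK[OF x Ksupp_cpt[OF f]] finite_subset by blast
qed

lemma supp_finP: "f \<in> A \<Longrightarrow> e \<in> S.C \<Longrightarrow>
   finite {\<alpha> \<in> Gr (G.r (q e)). f (P \<alpha>) * h \<alpha> \<noteq> 0}"
  by (rule supp_fin) (auto simp: Gr_def)

lemma tconv_eq: assumes f: "f \<in> A" and g: "g \<in> A"
  and P': "\<And>\<gamma>. \<gamma> \<in> G.C \<Longrightarrow> P' \<gamma> \<in> S.C \<and> q (P' \<gamma>) = \<gamma>"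
  shows "tconv G S q P' f g = conv2 f g"
    and "e \<in> S.C \<Longrightarrow> finite (conv_support G S q P' f g e)"
proof -
  have main: "tconv G S q P' f g e = conv2 f g e \<and> finite (conv_support G S q P' f g e)"
    if e: "e \<in> S.C" for e
  proof -
    let ?a = "q e"
    have a: "?a \<in> G.C" using e by simp
    have cs: "conv_support G S q P' f g e = {\<gamma> \<in> Gr (G.s ?a). conv_summand S P' f g e \<gamma> \<noteq> 0}"
      unfolding conv_support_def Gr_def by auto
    define \<sigma> where "\<sigma> \<alpha> = S.m e (P' (G.m (G.iv ?a) \<alpha>))" for \<alpha>
    let ?h' = "\<lambda>\<alpha>. f (\<sigma> \<alpha>) * g (S.m (S.iv (\<sigma> \<alpha>)) e)"
    have hh: "?h' (G.m ?a \<gamma>) = conv_summand S P' f g e \<gamma>" if \<gamma>: "\<gamma> \<in> Gr (G.s ?a)" for \<gamma>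
    proof -
      have gC: "\<gamma> \<in> G.C" and rg: "G.r \<gamma> = G.s ?a" using \<gamma> by (auto simp: Gr_def)
      have "G.m (G.iv ?a) (G.m ?a \<gamma>) = G.m (G.m (G.iv ?a) ?a) \<gamma>"
        using a gC rg by (intro G.assoc[symmetric]) auto
      moreover have "G.m (G.s ?a) \<gamma> = \<gamma>" using G.lunit[of \<gamma>] gC rg by simp
      ultimately have 1: "G.m (G.iv ?a) (G.m ?a \<gamma>) = \<gamma>" using a gC rg by simp
      have pC: "P' \<gamma> \<in> S.C" and qp: "q (P' \<gamma>) = \<gamma>" using P' gC by auto
      have c1: "S.s e = S.r (P' \<gamma>)" using S_comp_iff[OF e pC] qp rg by simp
      have "S.m (S.iv (S.m e (P' \<gamma>))) e = S.m (S.m (S.iv (P' \<gamma>)) (S.iv e)) e"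
        using S.iv_mult[OF e pC c1] by simp
      also have "\<dots> = S.m (S.iv (P' \<gamma>)) (S.m (S.iv e) e)"
        using e pC c1 by (intro S.assoc) auto
      also have "\<dots> = S.iv (P' \<gamma>)" using e pC c1 S.runit[of "S.iv (P' \<gamma>)"] by simp
      finally show ?thesis unfolding \<sigma>_def conv_summand_def using 1 by simp
    qed
    have \<sigma>ok: "\<sigma> \<alpha> \<in> S.C \<and> q (\<sigma> \<alpha>) = \<alpha>" if \<alpha>: "\<alpha> \<in> Gr (G.r (q e))" for \<alpha>
    proof -
      have aC: "\<alpha> \<in> G.C" and ra: "G.r \<alpha> = G.r ?a" using \<alpha> by (auto simp: Gr_def)
      let ?b = "G.m (G.iv ?a) \<alpha>"
      have bC: "?b \<in> G.C" and rb: "G.r ?b = G.s ?a" using a aC ra by auto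
      have pC: "P' ?b \<in> S.C" and qp: "q (P' ?b) = ?b" using P' bC by auto
      have c1: "S.s e = S.r (P' ?b)" using S_comp_iff[OF e pC] qp rb by simp
      have "q (\<sigma> \<alpha>) = G.m ?a ?b" unfolding \<sigma>_def using q_mult[OF e pC c1] qp by simp
      also have "\<dots> = G.m (G.m ?a (G.iv ?a)) \<alpha>" using a aC ra by (intro G.assoc[symmetric]) auto
      also have "\<dots> = G.m (G.r \<alpha>) \<alpha>" using a ra by simp
      also have "\<dots> = \<alpha>" using aC by simp
      finally show ?thesis unfolding \<sigma>_def using e pC c1 by simp
    qed
    have tc: "tconv G S q P' f g e = fsum (conv_summand S P' f g e) (Gr (G.s ?a))"
      unfolding tconv_def fsum_def cs using e by simp
    have "fsum (conv_summand S P' f g e) (Gr (G.s ?a)) = fsum ?h' (Gr (G.r ?a))"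
      by (rule fsum_reindex[OF Gr_bij[OF a]]) (rule hh)
    also have "\<dots> = conv2 f g e" by (rule sec[OF f g e \<sigma>ok, symmetric])
    finally have 1: "tconv G S q P' f g e = conv2 f g e" using tc by simp
    have "bij_betw (G.m ?a) (conv_support G S q P' f g e) {\<alpha> \<in> Gr (G.r ?a). ?h' \<alpha> \<noteq> 0}"
      unfolding cs by (rule supp_bij[OF Gr_bij[OF a]]) (rule hh)
    moreover have "finite {\<alpha> \<in> Gr (G.r ?a). ?h' \<alpha> \<noteq> 0}"
      by (rule supp_fin[OF f]) (use a \<sigma>ok in auto)
    ultimately have "finite (conv_support G S q P' f g e)" using bij_betw_finite by blast
    then show ?thesis using 1 by simp
  qed
  show "tconv G S q P' f g = conv2 f g"
  proof
    fix e show "tconv G S q P' f g e = conv2 f g e"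
    proof (cases "e \<in> S.C")
      case True then show ?thesis using main by blast
    next
      case False then show ?thesis unfolding tconv_def conv2_def by simp
    qed
  qed
  show "e \<in> S.C \<Longrightarrow> finite (conv_support G S q P' f g e)" using main by blast
qed

end

context twist
begin

lemma G_canc: "a \<in> G.C \<Longrightarrow> b \<in> G.C \<Longrightarrow> G.r a = G.r b \<Longrightarrow> G.m a (G.m (G.iv a) b) = b"
proof -
  assume a: "a \<in> G.C" and b: "b \<in> G.C" and r: "G.r a = G.r b"
  have "G.m a (G.m (G.iv a) b) = G.m (G.m a (G.iv a)) b" using a b r by (intro G.assoc[symmetric]) auto
  also have "\<dots> = G.m (G.r b) b" using a r by simp
  also have "\<dots> = b" using b by simp
  finally show ?thesis .
qed

lemma q_ivm: "a \<in> S.C \<Longrightarrow> b \<in> S.C \<Longrightarrow> S.r a = S.r b \<Longrightarrow>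
   S.m (S.iv a) b \<in> S.C \<and> q (S.m (S.iv a) b) = G.m (G.iv (q a)) (q b) \<and>
   G.r (q (S.m (S.iv a) b)) = G.s (q a)"
proof -
  assume a: "a \<in> S.C" and b: "b \<in> S.C" and r: "S.r a = S.r b"
  have c: "S.s (S.iv a) = S.r b" using a r by simp
  have "q (S.m (S.iv a) b) = G.m (G.iv (q a)) (q b)" using q_mult[of "S.iv a" b] a b c by simp
  moreover have "G.s (G.iv (q a)) = G.r (q b)" using q_mult[of "S.iv a" b] a b c by simp
  ultimately show ?thesis using a b c by simp
qed

lemma S_ident: assumes a: "a \<in> S.C" and b: "b \<in> S.C" and e: "e \<in> S.C"
  and ra: "S.r a = S.r e" and rb: "S.r b = S.r e"
  shows "S.m (S.iv (S.m (S.iv a) b)) (S.m (S.iv a) e) = S.m (S.iv b) e"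
proof -
  have c1: "S.s (S.iv a) = S.r b" using a ra rb by simp
  have c2: "S.s (S.iv a) = S.r e" using a ra by simp
  have "S.iv (S.m (S.iv a) b) = S.m (S.iv b) a" using S.iv_mult[of "S.iv a" b] a b c1 by simp
  then have "S.m (S.iv (S.m (S.iv a) b)) (S.m (S.iv a) e) = S.m (S.m (S.iv b) a) (S.m (S.iv a) e)"
    by simp
  also have "\<dots> = S.m (S.iv b) (S.m a (S.m (S.iv a) e))"
    using a b e ra rb by (intro S.assoc) auto
  also have "S.m a (S.m (S.iv a) e) = S.m (S.m a (S.iv a)) e"
    using a e ra by (intro S.assoc[symmetric]) auto
  also have "\<dots> = S.m (S.r e) e" using a ra by simp
  also have "\<dots> = e" using e by simp
  finally show ?thesis .
qed

lemma conv2_nz: "conv2 f g e \<noteq> 0 \<Longrightarrow>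
   e \<in> S.C \<and> (\<exists>\<alpha>\<in>Gr (G.r (q e)). f (P \<alpha>) \<noteq> 0 \<and> g (S.m (S.iv (P \<alpha>)) e) \<noteq> 0)"
proof -
  assume nz: "conv2 f g e \<noteq> 0"
  then have e: "e \<in> S.C" unfolding conv2_def by (cases "e \<in> S.C") auto
  then have "fsum (\<lambda>\<alpha>. f (P \<alpha>) * g (S.m (S.iv (P \<alpha>)) e)) (Gr (G.r (q e))) \<noteq> 0"
    using nz unfolding conv2_def by simp
  then obtain \<alpha> where a: "\<alpha> \<in> Gr (G.r (q e))" and nz2: "f (P \<alpha>) * g (S.m (S.iv (P \<alpha>)) e) \<noteq> 0"
    using fsum_nz by blast
  have "f (P \<alpha>) \<noteq> 0" using nz2 by (metis mult_zero_left)
  moreover have "g (S.m (S.iv (P \<alpha>)) e) \<noteq> 0" using nz2 by (metis mult_zero_right)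
  ultimately show ?thesis using e a by blast
qed

lemma conv2_qsupp: assumes f: "f \<in> A" and g: "g \<in> A" and nz: "conv2 f g e \<noteq> 0"
  shows "e \<in> S.C \<and> q e \<in> Mset (Ksupp f) (Ksupp g)"
proof -
  obtain \<alpha> where e: "e \<in> S.C" and a: "\<alpha> \<in> Gr (G.r (q e))" and fa: "f (P \<alpha>) \<noteq> 0"
    and ga: "g (S.m (S.iv (P \<alpha>)) e) \<noteq> 0"
    using conv2_nz[OF nz] by blast
  have aC: "\<alpha> \<in> G.C" and ra: "G.r \<alpha> = G.r (q e)" using a by (auto simp: Gr_def)
  let ?b = "S.m (S.iv (P \<alpha>)) e"
  have bb: "?b \<in> S.C \<and> q ?b = G.m (G.iv \<alpha>) (q e) \<and> G.r (q ?b) = G.s \<alpha>"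
    using q_ivm[of "P \<alpha>" e] aC e Sr_P[OF a e] ra by simp
  have k1: "\<alpha> \<in> Ksupp f" using Ksupp_mem[of "P \<alpha>" f] fa aC by simp
  have k2: "q ?b \<in> Ksupp g" using Ksupp_mem[of ?b g] ga bb by simp
  have qbC: "q ?b \<in> G.C" by (rule q_in) (use bb in blast)
  have sc: "G.s \<alpha> = G.r (q ?b)" using bb by (elim conjE) (rule sym)
  have "G.m \<alpha> (q ?b) \<in> Mset (Ksupp f) (Ksupp g)"
    by (rule Mset_mem[OF k1 k2 aC qbC sc])
  moreover have "G.m \<alpha> (q ?b) = q e" using bb G_canc[of \<alpha> "q e"] aC e ra by simp
  ultimately show ?thesis using e by simp
qed

lemma conv2_eqv: assumes f: "f \<in> A" and g: "g \<in> A" and e: "e \<in> S.C" and z: "z \<in> T"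
  shows "conv2 f g (ta z e) = z * conv2 f g e"
proof -
  let ?x = "G.r (q e)"
  have "conv2 f g (ta z e) = fsum (\<lambda>\<alpha>. f (P \<alpha>) * g (S.m (S.iv (P \<alpha>)) (ta z e))) (Gr ?x)"
    unfolding conv2_def using e z by simp
  also have "\<dots> = fsum (\<lambda>\<alpha>. z * (f (P \<alpha>) * g (S.m (S.iv (P \<alpha>)) e))) (Gr ?x)"
  proof (rule fsum_cong)
    fix \<alpha> assume a: "\<alpha> \<in> Gr ?x"
    have aC: "\<alpha> \<in> G.C" using a by (simp add: Gr_def)
    have c: "S.s (S.iv (P \<alpha>)) = S.r e" using Sr_P[OF a e] aC by simp
    have "S.m (S.iv (P \<alpha>)) (ta z e) = ta z (S.m (S.iv (P \<alpha>)) e)"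
      by (rule ta_mult_r) (use aC e c z in auto)
    moreover have "g (ta z (S.m (S.iv (P \<alpha>)) e)) = z * g (S.m (S.iv (P \<alpha>)) e)"
      by (rule A_eqv[OF g]) (use aC e c z in auto)
    ultimately show "f (P \<alpha>) * g (S.m (S.iv (P \<alpha>)) (ta z e)) = z * (f (P \<alpha>) * g (S.m (S.iv (P \<alpha>)) e))"
      by (simp add: algebra_simps)
  qed
  also have "\<dots> = z * conv2 f g e"
    unfolding conv2_def using e by (simp add: fsum_mult[OF supp_finP[OF f e]])
  finally show ?thesis .
qed

lemma conv2_add_r: assumes f: "f \<in> A"
  shows "conv2 f (\<lambda>e. g e + h e) = (\<lambda>e. conv2 f g e + conv2 f h e)"
proof
  fix e show "conv2 f (\<lambda>e. g e + h e) e = conv2 f g e + conv2 f h e"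
  proof (cases "e \<in> S.C")
    case True
    then show ?thesis unfolding conv2_def
      by (simp add: distrib_left fsum_add[OF supp_finP[OF f True] supp_finP[OF f True]])
  qed (simp add: conv2_def)
qed

lemma conv2_add_l: assumes f: "f \<in> A" and g: "g \<in> A"
  shows "conv2 (\<lambda>e. f e + g e) h = (\<lambda>e. conv2 f h e + conv2 g h e)"
proof
  fix e show "conv2 (\<lambda>e. f e + g e) h e = conv2 f h e + conv2 g h e"
  proof (cases "e \<in> S.C")
    case True
    then show ?thesis unfolding conv2_def
      by (simp add: distrib_right fsum_add[OF supp_finP[OF f True] supp_finP[OF g True]])
  qed (simp add: conv2_def)
qed

lemma conv2_smult_l: assumes f: "f \<in> A"
  shows "conv2 (\<lambda>e. c * f e) g = (\<lambda>e. c * conv2 f g e)"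
proof
  fix e show "conv2 (\<lambda>e. c * f e) g e = c * conv2 f g e"
  proof (cases "e \<in> S.C")
    case True
    then show ?thesis unfolding conv2_def
      by (simp add: mult.assoc fsum_mult[OF supp_finP[OF f True]])
  qed (simp add: conv2_def)
qed

lemma conv2_smult_r: assumes f: "f \<in> A"
  shows "conv2 f (\<lambda>e. c * g e) = (\<lambda>e. c * conv2 f g e)"
proof
  fix e show "conv2 f (\<lambda>e. c * g e) e = c * conv2 f g e"
  proof (cases "e \<in> S.C")
    case True
    have "fsum (\<lambda>\<alpha>. f (P \<alpha>) * (c * g (S.m (S.iv (P \<alpha>)) e))) (Gr (G.r (q e))) =
          fsum (\<lambda>\<alpha>. c * (f (P \<alpha>) * g (S.m (S.iv (P \<alpha>)) e))) (Gr (G.r (q e)))"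
      by (rule fsum_cong) (simp add: algebra_simps)
    then show ?thesis unfolding conv2_def using True
      by (simp add: fsum_mult[OF supp_finP[OF f True]])
  qed (simp add: conv2_def)
qed

lemma zero_A: "(\<lambda>_. 0) \<in> A"
  unfolding twisted_steinberg_def by simp

lemma add_A: assumes f: "f \<in> A" and g: "g \<in> A" shows "(\<lambda>e. f e + g e) \<in> A"
proof -
  have c: "continuous_map (gtop S) (discrete_topology UNIV) (\<lambda>e. f e + g e)"
    by (rule cont_discrete_add[OF A_cont[OF f] A_cont[OF g]])
  have "q ` {e \<in> S.C. f e + g e \<noteq> 0} \<subseteq> Ksupp f \<union> Ksupp g"
  proof
    fix x assume "x \<in> q ` {e \<in> S.C. f e + g e \<noteq> 0}"
    then obtain e where e: "e \<in> S.C" "f e + g e \<noteq> 0" "x = q e" by blast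
    then have "f e \<noteq> 0 \<or> g e \<noteq> 0" by auto
    then show "x \<in> Ksupp f \<union> Ksupp g" using Ksupp_mem e by blast
  qed
  then have k: "compactin (gtop G) ((gtop G) closure_of (q ` {e \<in> S.C. f e + g e \<noteq> 0}))"
    using compact_closure_sub[OF HausG compactin_Un[OF Ksupp_cpt[OF f] Ksupp_cpt[OF g]]] by blast
  show ?thesis unfolding twisted_steinberg_def
    using c k A_eqv[OF f] A_eqv[OF g] A_zero[OF f] A_zero[OF g] by (simp add: distrib_left)
qed

lemma smult_A: assumes f: "f \<in> A" shows "(\<lambda>e. c * f e) \<in> A"
proof -
  have c: "continuous_map (gtop S) (discrete_topology UNIV) (\<lambda>e. c * f e)"
    by (rule cont_discrete_comp[OF A_cont[OF f]])
  have "q ` {e \<in> S.C. c * f e \<noteq> 0} \<subseteq> Ksupp f"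
  proof
    fix x assume "x \<in> q ` {e \<in> S.C. c * f e \<noteq> 0}"
    then obtain e where e: "e \<in> S.C" "c * f e \<noteq> 0" "x = q e" by blast
    then have "f e \<noteq> 0" by auto
    then show "x \<in> Ksupp f" using Ksupp_mem e by blast
  qed
  then have k: "compactin (gtop G) ((gtop G) closure_of (q ` {e \<in> S.C. c * f e \<noteq> 0}))"
    using compact_closure_sub[OF HausG Ksupp_cpt[OF f]] by blast
  show ?thesis unfolding twisted_steinberg_def
    using c k A_eqv[OF f] A_zero[OF f] by (simp add: algebra_simps)
qed

lemma conv2_A_of_cont: assumes f: "f \<in> A" and g: "g \<in> A"
  and c: "continuous_map (gtop S) (discrete_topology UNIV) (conv2 f g)"
  shows "conv2 f g \<in> A"
proof -
  have "q ` {e \<in> S.C. conv2 f g e \<noteq> 0} \<subseteq> Mset (Ksupp f) (Ksupp g)"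
    using conv2_qsupp[OF f g] by blast
  then have k: "compactin (gtop G) ((gtop G) closure_of (q ` {e \<in> S.C. conv2 f g e \<noteq> 0}))"
    using compact_closure_sub[OF HausG Mset_cpt[OF Ksupp_cpt[OF f] Ksupp_cpt[OF g]]] by blast
  show ?thesis unfolding twisted_steinberg_def
    using c k conv2_eqv[OF f g] by (simp add: conv2_def)
qed

end

context twist
begin

lemma conv2_assoc: assumes f: "f \<in> A" and g: "g \<in> A" and h: "h \<in> A"
  shows "conv2 (conv2 f g) h = conv2 f (conv2 g h)"
proof
  fix e
  show "conv2 (conv2 f g) h e = conv2 f (conv2 g h) e"
  proof (cases "e \<in> S.C")
    case False then show ?thesis by (simp add: conv2_def)
  next
    case e: True
    define x where "x = G.r (q e)"
    have xC: "x \<in> G.C" using e by (simp add: x_def)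
    define M where "M = Mset (Ksupp f) (Ksupp g)"
    define Fa where "Fa = Gr x \<inter> M"
    define Fb where "Fb = Gr x \<inter> Ksupp f"
    have fFa: "finite Fa" unfolding Fa_def M_def
      by (rule finite_GrK[OF xC Mset_cpt[OF Ksupp_cpt[OF f] Ksupp_cpt[OF g]]])
    have fFb: "finite Fb" unfolding Fb_def by (rule finite_GrK[OF xC Ksupp_cpt[OF f]])
    have GrI: "\<And>a. a \<in> Gr x \<Longrightarrow> a \<in> G.C \<and> G.r a = x" by (simp add: Gr_def)
    have SrP: "\<And>a. a \<in> Gr x \<Longrightarrow> S.r (P a) = S.r e" using Sr_P e unfolding x_def by blast
    define Tm where "Tm \<alpha> \<beta> = f (P \<beta>) * g (S.m (S.iv (P \<beta>)) (P \<alpha>)) * h (S.m (S.iv (P \<alpha>)) e)"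
      for \<alpha> \<beta>
    have L1: "conv2 f g (P \<alpha>) = sum (\<lambda>\<beta>. f (P \<beta>) * g (S.m (S.iv (P \<beta>)) (P \<alpha>))) Fb"
      if a: "\<alpha> \<in> Gr x" for \<alpha>
    proof -
      have aC: "\<alpha> \<in> G.C" and ra: "G.r \<alpha> = x" using GrI[OF a] by auto
      have "conv2 f g (P \<alpha>) = fsum (\<lambda>\<beta>. f (P \<beta>) * g (S.m (S.iv (P \<beta>)) (P \<alpha>))) (Gr x)"
        unfolding conv2_def using aC ra by simp
      also have "\<dots> = sum (\<lambda>\<beta>. f (P \<beta>) * g (S.m (S.iv (P \<beta>)) (P \<alpha>))) Fb"
      proof (rule fsum_eq[OF fFb])
        show "Fb \<subseteq> Gr x" unfolding Fb_def by blast
        fix \<beta> assume b: "\<beta> \<in> Gr x" "\<beta> \<notin> Fb"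
        have "f (P \<beta>) = 0"
        proof (rule ccontr)
          assume "f (P \<beta>) \<noteq> 0"
          then have "q (P \<beta>) \<in> Ksupp f" using Ksupp_mem[of "P \<beta>" f] GrI[OF b(1)] by simp
          then show False using b GrI[OF b(1)] unfolding Fb_def by simp
        qed
        then show "f (P \<beta>) * g (S.m (S.iv (P \<beta>)) (P \<alpha>)) = 0" by simp
      qed
      finally show ?thesis .
    qed
    have "conv2 (conv2 f g) h e = fsum (\<lambda>\<alpha>. conv2 f g (P \<alpha>) * h (S.m (S.iv (P \<alpha>)) e)) (Gr x)"
      unfolding conv2_def[of "conv2 f g"] using e by (simp add: x_def)
    also have "\<dots> = sum (\<lambda>\<alpha>. conv2 f g (P \<alpha>) * h (S.m (S.iv (P \<alpha>)) e)) Fa"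
    proof (rule fsum_eq[OF fFa])
      show "Fa \<subseteq> Gr x" unfolding Fa_def by blast
      fix \<alpha> assume a: "\<alpha> \<in> Gr x" "\<alpha> \<notin> Fa"
      have "conv2 f g (P \<alpha>) = 0"
      proof (rule ccontr)
        assume "conv2 f g (P \<alpha>) \<noteq> 0"
        then have "q (P \<alpha>) \<in> M" using conv2_qsupp[OF f g] unfolding M_def by blast
        then show False using a GrI[OF a(1)] unfolding Fa_def by simp
      qed
      then show "conv2 f g (P \<alpha>) * h (S.m (S.iv (P \<alpha>)) e) = 0" by simp
    qed
    also have "\<dots> = sum (\<lambda>\<alpha>. sum (\<lambda>\<beta>. Tm \<alpha> \<beta>) Fb) Fa"
    proof (rule sum.cong[OF refl])
      fix \<alpha> assume "\<alpha> \<in> Fa"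
      then have a: "\<alpha> \<in> Gr x" unfolding Fa_def by blast
      show "conv2 f g (P \<alpha>) * h (S.m (S.iv (P \<alpha>)) e) = sum (\<lambda>\<beta>. Tm \<alpha> \<beta>) Fb"
        unfolding L1[OF a] Tm_def by (simp add: sum_distrib_right)
    qed
    finally have LHS: "conv2 (conv2 f g) h e = sum (\<lambda>\<alpha>. sum (\<lambda>\<beta>. Tm \<alpha> \<beta>) Fb) Fa" .
    have R1: "conv2 g h (S.m (S.iv (P \<beta>)) e) =
        sum (\<lambda>\<alpha>. g (S.m (S.iv (P \<beta>)) (P \<alpha>)) * h (S.m (S.iv (P \<alpha>)) e)) Fa"
      if b: "\<beta> \<in> Fb" for \<beta>
    proof -
      have bG: "\<beta> \<in> Gr x" and bK: "\<beta> \<in> Ksupp f" using b unfolding Fb_def by auto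
      have bC: "\<beta> \<in> G.C" and rb: "G.r \<beta> = x" using GrI[OF bG] by auto
      define c where "c = S.m (S.iv (P \<beta>)) e"
      have cc: "c \<in> S.C \<and> q c = G.m (G.iv \<beta>) (q e) \<and> G.r (q c) = G.s \<beta>"
        unfolding c_def using q_ivm[of "P \<beta>" e] bC e SrP[OF bG] rb by (simp add: x_def)
      define \<sigma> where "\<sigma> \<delta> = S.m (S.iv (P \<beta>)) (P (G.m \<beta> \<delta>))" for \<delta>
      have \<sigma>ok: "\<sigma> \<delta> \<in> S.C \<and> q (\<sigma> \<delta>) = \<delta>" if d: "\<delta> \<in> Gr (G.r (q c))" for \<delta>
      proof -
        have dC: "\<delta> \<in> G.C" and rd: "G.r \<delta> = G.s \<beta>" using d cc by (auto simp: Gr_def)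
        have bd: "G.m \<beta> \<delta> \<in> Gr x" using bC dC rd rb by (simp add: Gr_def)
        have bdC: "G.m \<beta> \<delta> \<in> G.C" using bC dC rd by simp
        have "\<sigma> \<delta> \<in> S.C \<and> q (\<sigma> \<delta>) = G.m (G.iv \<beta>) (G.m \<beta> \<delta>)"
          unfolding \<sigma>_def using q_ivm[of "P \<beta>" "P (G.m \<beta> \<delta>)"] bC bdC SrP[OF bG] SrP[OF bd] by simp
        moreover have "G.m (G.iv \<beta>) (G.m \<beta> \<delta>) = \<delta>"
          using G_canc[of "G.iv \<beta>" \<delta>] bC dC rd by simp
        ultimately show ?thesis by simp
      qed
      have "conv2 g h c = fsum (\<lambda>\<delta>. g (\<sigma> \<delta>) * h (S.m (S.iv (\<sigma> \<delta>)) c)) (Gr (G.r (q c)))"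
        by (rule sec[OF g h _ \<sigma>ok]) (use cc in blast)
      also have "\<dots> = fsum (\<lambda>\<alpha>. g (S.m (S.iv (P \<beta>)) (P \<alpha>)) *
            h (S.m (S.iv (S.m (S.iv (P \<beta>)) (P \<alpha>))) c)) (Gr x)"
      proof (rule fsum_reindex)
        show "bij_betw (G.m \<beta>) (Gr (G.r (q c))) (Gr x)"
        proof -
          have rc: "G.r (q c) = G.s \<beta>" using cc by (elim conjE)
          show ?thesis using Gr_bij[OF bC] rc rb by simp
        qed
      qed (simp add: \<sigma>_def)
      also have "\<dots> = fsum (\<lambda>\<alpha>. g (S.m (S.iv (P \<beta>)) (P \<alpha>)) * h (S.m (S.iv (P \<alpha>)) e)) (Gr x)"
      proof (rule fsum_cong)
        fix \<alpha> assume a: "\<alpha> \<in> Gr x"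
        have "S.m (S.iv (S.m (S.iv (P \<beta>)) (P \<alpha>))) c = S.m (S.iv (P \<alpha>)) e"
          unfolding c_def by (rule S_ident) (use bC GrI[OF a] e SrP[OF bG] SrP[OF a] in auto)
        then show "g (S.m (S.iv (P \<beta>)) (P \<alpha>)) * h (S.m (S.iv (S.m (S.iv (P \<beta>)) (P \<alpha>))) c) =
           g (S.m (S.iv (P \<beta>)) (P \<alpha>)) * h (S.m (S.iv (P \<alpha>)) e)" by simp
      qed
      also have "\<dots> = sum (\<lambda>\<alpha>. g (S.m (S.iv (P \<beta>)) (P \<alpha>)) * h (S.m (S.iv (P \<alpha>)) e)) Fa"
      proof (rule fsum_eq[OF fFa])
        show "Fa \<subseteq> Gr x" unfolding Fa_def by blast
        fix \<alpha> assume a: "\<alpha> \<in> Gr x" "\<alpha> \<notin> Fa"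
        have aC: "\<alpha> \<in> G.C" and ra: "G.r \<alpha> = x" using GrI[OF a(1)] by auto
        let ?d = "S.m (S.iv (P \<beta>)) (P \<alpha>)"
        have dd: "?d \<in> S.C \<and> q ?d = G.m (G.iv \<beta>) \<alpha> \<and> G.r (q ?d) = G.s \<beta>"
          using q_ivm[of "P \<beta>" "P \<alpha>"] bC aC SrP[OF bG] SrP[OF a(1)] ra rb by simp
        have "g ?d = 0"
        proof (rule ccontr)
          assume "g ?d \<noteq> 0"
          then have k2: "q ?d \<in> Ksupp g" using Ksupp_mem dd by blast
          have qdC: "q ?d \<in> G.C" by (rule q_in) (use dd in blast)
          have sc: "G.s \<beta> = G.r (q ?d)" using dd by (elim conjE) (rule sym)
          have "G.m \<beta> (q ?d) \<in> M" unfolding M_def by (rule Mset_mem[OF bK k2 bC qdC sc])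
          moreover have "G.m \<beta> (q ?d) = \<alpha>" using dd G_canc[of \<beta> \<alpha>] bC aC ra rb by simp
          ultimately show False using a unfolding Fa_def by simp
        qed
        then show "g ?d * h (S.m (S.iv (P \<alpha>)) e) = 0" by simp
      qed
      finally show ?thesis unfolding c_def .
    qed
    have "conv2 f (conv2 g h) e = fsum (\<lambda>\<beta>. f (P \<beta>) * conv2 g h (S.m (S.iv (P \<beta>)) e)) (Gr x)"
      unfolding conv2_def[of f] using e by (simp add: x_def)
    also have "\<dots> = sum (\<lambda>\<beta>. f (P \<beta>) * conv2 g h (S.m (S.iv (P \<beta>)) e)) Fb"
    proof (rule fsum_eq[OF fFb])
      show "Fb \<subseteq> Gr x" unfolding Fb_def by blast
      fix \<beta> assume b: "\<beta> \<in> Gr x" "\<beta> \<notin> Fb"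
      have "f (P \<beta>) = 0"
      proof (rule ccontr)
        assume "f (P \<beta>) \<noteq> 0"
        then have "q (P \<beta>) \<in> Ksupp f" using Ksupp_mem[of "P \<beta>" f] GrI[OF b(1)] by simp
        then show False using b GrI[OF b(1)] unfolding Fb_def by simp
      qed
      then show "f (P \<beta>) * conv2 g h (S.m (S.iv (P \<beta>)) e) = 0" by simp
    qed
    also have "\<dots> = sum (\<lambda>\<beta>. sum (\<lambda>\<alpha>. Tm \<alpha> \<beta>) Fa) Fb"
    proof (rule sum.cong[OF refl])
      fix \<beta> assume b: "\<beta> \<in> Fb"
      show "f (P \<beta>) * conv2 g h (S.m (S.iv (P \<beta>)) e) = sum (\<lambda>\<alpha>. Tm \<alpha> \<beta>) Fa"
        unfolding R1[OF b] Tm_def by (simp add: sum_distrib_left mult.assoc)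
    qed
    also have "\<dots> = sum (\<lambda>\<alpha>. sum (\<lambda>\<beta>. Tm \<alpha> \<beta>) Fb) Fa" by (rule sum.swap)
    finally show ?thesis using LHS by simp
  qed
qed

end

context twist
begin

lemma tconv_fsum: "e \<in> S.C \<Longrightarrow>
   tconv G S q P' f g e = fsum (conv_summand S P' f g e) (Gr (G.s (q e)))"
proof -
  assume e: "e \<in> S.C"
  have cs: "conv_support G S q P' f g e = {\<gamma> \<in> Gr (G.s (q e)). conv_summand S P' f g e \<gamma> \<noteq> 0}"
    unfolding conv_support_def Gr_def by auto
  show ?thesis unfolding tconv_def fsum_def cs using e by simp
qed

context
  fixes bar :: "'r \<Rightarrow> 'r"
  assumes TI: "T_inverse_involution T bar"
begin

lemma bar_add: "bar (a + b) = bar a + bar b"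
  and bar_mult: "bar (a * b) = bar b * bar a"
  and bar_one: "bar 1 = 1" and bar_bar: "bar (bar a) = a"
  and bar_T: "z \<in> T \<Longrightarrow> z * bar z = 1"
  using TI unfolding T_inverse_involution_def ring_involution_def by auto

lemma bar_zero: "bar 0 = 0"
proof -
  have "bar 0 = bar 0 + bar 0" using bar_add[of 0 0] by simp
  then show ?thesis by simp
qed

lemma bar_eq0: "bar a = 0 \<Longrightarrow> a = 0"
  using bar_bar[of a] bar_zero by simp

lemma bar_tinv: "z \<in> T \<Longrightarrow> bar (tinv z) = z"
proof -
  assume z: "z \<in> T"
  have "z = z * (tinv z * bar (tinv z))" using bar_T[of "tinv z"] z by simp
  also have "\<dots> = (z * tinv z) * bar (tinv z)" by (simp add: mult.assoc)
  also have "\<dots> = bar (tinv z)" using z by simp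
  finally show ?thesis by simp
qed

abbreviation "st \<equiv> tstar S bar"

lemma st_in_A: assumes f: "f \<in> A" shows "st f \<in> A"
proof -
  have c0: "continuous_map (gtop S) (discrete_topology UNIV) (\<lambda>e. bar ((f \<circ> S.iv) e))"
    by (rule cont_discrete_comp[OF continuous_map_compose[OF contS(3) A_cont[OF f]]])
  have c: "continuous_map (gtop S) (discrete_topology UNIV) (st f)"
    by (rule continuous_map_eq[OF c0]) (simp add: tstar_def)
  have eqv: "st f (ta z e) = z * st f e" if e: "e \<in> S.C" and z: "z \<in> T" for e z
  proof -
    have "st f (ta z e) = bar (f (ta (tinv z) (S.iv e)))"
      unfolding tstar_def using e z ta_iv[OF e z] by simp
    also have "\<dots> = bar (tinv z * f (S.iv e))" using A_eqv[OF f, of "S.iv e" "tinv z"] e z by simp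
    also have "\<dots> = bar (f (S.iv e)) * z" using bar_mult bar_tinv z by simp
    also have "\<dots> = z * st f e" unfolding tstar_def using e by (simp add: mult.commute)
    finally show ?thesis .
  qed
  have "q ` {e \<in> S.C. st f e \<noteq> 0} \<subseteq> G.iv ` Ksupp f"
  proof
    fix x assume "x \<in> q ` {e \<in> S.C. st f e \<noteq> 0}"
    then obtain e where e: "e \<in> S.C" "st f e \<noteq> 0" "x = q e" by blast
    then have "bar (f (S.iv e)) \<noteq> 0" unfolding tstar_def by simp
    then have "f (S.iv e) \<noteq> 0" using bar_zero by auto
    then have "q (S.iv e) \<in> Ksupp f" using Ksupp_mem[of "S.iv e" f] e by simp
    then have "G.iv (q e) \<in> Ksupp f" using e by simp
    moreover have "x = G.iv (G.iv (q e))" using e by simp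
    ultimately show "x \<in> G.iv ` Ksupp f" by blast
  qed
  moreover have "compactin (gtop G) (G.iv ` Ksupp f)"
    by (rule image_compactin[OF Ksupp_cpt[OF f] contG(3)])
  ultimately have k: "compactin (gtop G) ((gtop G) closure_of (q ` {e \<in> S.C. st f e \<noteq> 0}))"
    using compact_closure_sub[OF HausG] by blast
  show ?thesis unfolding twisted_steinberg_def
    using c eqv k by (simp add: tstar_def)
qed

lemma st_st: assumes f: "f \<in> A" shows "st (st f) = f"
proof
  fix e show "st (st f) e = f e"
    by (cases "e \<in> S.C") (simp_all add: tstar_def bar_bar A_zero[OF f])
qed

lemma st_add: "st (\<lambda>e. f e + g e) = (\<lambda>e. st f e + st g e)"
proof
  fix e show "st (\<lambda>e. f e + g e) e = st f e + st g e"
    by (cases "e \<in> S.C") (simp_all add: tstar_def bar_add)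
qed

lemma st_smult: "st (\<lambda>e. c * f e) = (\<lambda>e. bar c * st f e)"
proof
  fix e show "st (\<lambda>e. c * f e) e = bar c * st f e"
    by (cases "e \<in> S.C") (simp_all add: tstar_def bar_mult mult.commute)
qed

lemma st_conv: assumes f: "f \<in> A" and g: "g \<in> A"
  shows "st (conv2 f g) = conv2 (st g) (st f)"
proof
  fix e show "st (conv2 f g) e = conv2 (st g) (st f) e"
  proof (cases "e \<in> S.C")
    case False then show ?thesis by (simp add: tstar_def conv2_def)
  next
    case e: True
    let ?y = "G.s (q e)"
    have ry: "G.r (q (S.iv e)) = ?y" using e by simp
    have "st (conv2 f g) e = bar (fsum (\<lambda>\<alpha>. f (P \<alpha>) * g (S.m (S.iv (P \<alpha>)) (S.iv e))) (Gr ?y))"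
      unfolding tstar_def conv2_def using e ry by simp
    also have "\<dots> = fsum (\<lambda>\<alpha>. bar (f (P \<alpha>) * g (S.m (S.iv (P \<alpha>)) (S.iv e)))) (Gr ?y)"
      by (rule fsum_morph) (use bar_zero bar_add bar_eq0 in auto)
    also have "\<dots> = fsum (conv_summand S P (st g) (st f) e) (Gr ?y)"
    proof (rule fsum_cong)
      fix \<gamma> assume gy: "\<gamma> \<in> Gr ?y"
      have gC: "\<gamma> \<in> G.C" and rg: "G.r \<gamma> = ?y" using gy by (auto simp: Gr_def)
      have pC: "P \<gamma> \<in> S.C" using gC by simp
      have c1: "S.s e = S.r (P \<gamma>)" using S_comp_iff[OF e pC] gC rg by simp
      have "S.iv (S.m e (P \<gamma>)) = S.m (S.iv (P \<gamma>)) (S.iv e)" by (rule S.iv_mult[OF e pC c1])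
      then have 1: "st g (S.m e (P \<gamma>)) = bar (g (S.m (S.iv (P \<gamma>)) (S.iv e)))"
        unfolding tstar_def using e pC c1 by simp
      have 2: "st f (S.iv (P \<gamma>)) = bar (f (P \<gamma>))" unfolding tstar_def using pC by simp
      show "bar (f (P \<gamma>) * g (S.m (S.iv (P \<gamma>)) (S.iv e))) = conv_summand S P (st g) (st f) e \<gamma>"
        unfolding conv_summand_def 1 2 by (simp add: bar_mult)
    qed
    also have "\<dots> = tconv G S q P (st g) (st f) e" by (rule tconv_fsum[OF e, symmetric])
    also have "\<dots> = conv2 (st g) (st f) e"
      using tconv_eq(1)[OF st_in_A[OF g] st_in_A[OF f], of P] by simp
    finally show ?thesis .
  qed
qed

end
end

lemma lc_open:
  assumes c: "continuous_map (subtopology X N) (discrete_topology UNIV) h" and N: "openin X N"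
  shows "openin X {e \<in> N. h e = c}"
proof -
  have "openin (subtopology X N) {e \<in> topspace (subtopology X N). h e \<in> {c}}"
    by (rule openin_continuous_map_preimage[OF c]) simp
  moreover have "{e \<in> topspace (subtopology X N). h e \<in> {c}} = {e \<in> N. h e = c}"
    using openin_subset[OF N] by auto
  ultimately show ?thesis using openin_trans_full N by metis
qed

context twist
begin

definition Bs :: "'g \<Rightarrow> 'g set" where
  "Bs \<alpha> = (SOME B. openin (gtop G) B \<and> bisection G B \<and> \<alpha> \<in> B)"

lemma Bs_prop: assumes a: "\<alpha> \<in> G.C"
  shows "openin (gtop G) (Bs \<alpha>) \<and> bisection G (Bs \<alpha>) \<and> \<alpha> \<in> Bs \<alpha> \<and> Bs \<alpha> \<subseteq> G.C"
proof -
  have "openin (gtop G) G.C" using openin_topspace[of "gtop G"] by simp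
  then have "\<exists>B. openin (gtop G) B \<and> bisection G B \<and> \<alpha> \<in> B"
    using ample_basis[of "G.C" \<alpha>] a by blast
  then have "openin (gtop G) (Bs \<alpha>) \<and> bisection G (Bs \<alpha>) \<and> \<alpha> \<in> Bs \<alpha>"
    unfolding Bs_def by (rule someI_ex)
  moreover then have "Bs \<alpha> \<subseteq> G.C" unfolding bisection_def by blast
  ultimately show ?thesis by blast
qed

definition Us :: "'g \<Rightarrow> 'g set" where
  "Us \<alpha> = (SOME U. openin (gtop G) U \<and> G.r ` Bs \<alpha> = U \<inter> UG)"

lemma Us_prop: assumes a: "\<alpha> \<in> G.C"
  shows "openin (gtop G) (Us \<alpha>) \<and> G.r ` Bs \<alpha> = Us \<alpha> \<inter> UG"
proof -
  have "openin (subtopology (gtop G) UG) (G.r ` Bs \<alpha>)"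
    using Bs_prop[OF a] unfolding bisection_def by blast
  then have "\<exists>U. openin (gtop G) U \<and> G.r ` Bs \<alpha> = U \<inter> UG"
    unfolding openin_subtopology by blast
  then show ?thesis unfolding Us_def by (rule someI_ex)
qed

definition rho :: "'g \<Rightarrow> 'g \<Rightarrow> 'g" where
  "rho \<alpha> = (SOME \<rho>. homeomorphic_maps (subtopology (gtop G) (Bs \<alpha>))
      (subtopology (gtop G) (G.r ` Bs \<alpha>)) G.r \<rho>)"

lemma rho_maps: assumes a: "\<alpha> \<in> G.C"
  shows "homeomorphic_maps (subtopology (gtop G) (Bs \<alpha>)) (subtopology (gtop G) (G.r ` Bs \<alpha>)) G.r (rho \<alpha>)"
proof -
  have "homeomorphic_map (subtopology (gtop G) (Bs \<alpha>)) (subtopology (gtop G) (G.r ` Bs \<alpha>)) G.r"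
    using Bs_prop[OF a] unfolding bisection_def by blast
  then have "\<exists>\<rho>. homeomorphic_maps (subtopology (gtop G) (Bs \<alpha>)) (subtopology (gtop G) (G.r ` Bs \<alpha>)) G.r \<rho>"
    unfolding homeomorphic_map_maps .
  then show ?thesis unfolding rho_def by (rule someI_ex)
qed

lemma rho_cont: "\<alpha> \<in> G.C \<Longrightarrow>
  continuous_map (subtopology (gtop G) (G.r ` Bs \<alpha>)) (subtopology (gtop G) (Bs \<alpha>)) (rho \<alpha>)"
  using rho_maps unfolding homeomorphic_maps_def by blast

lemma rho1: assumes a: "\<alpha> \<in> G.C" and y: "y \<in> G.r ` Bs \<alpha>"
  shows "rho \<alpha> y \<in> Bs \<alpha> \<and> G.r (rho \<alpha> y) = y"
proof -
  have sub: "Bs \<alpha> \<subseteq> G.C" using Bs_prop[OF a] by blast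
  have yt: "y \<in> topspace (subtopology (gtop G) (G.r ` Bs \<alpha>))" using y sub by auto
  have "rho \<alpha> y \<in> topspace (subtopology (gtop G) (Bs \<alpha>))"
    using continuous_map_image_subset_topspace[OF rho_cont[OF a]] yt by blast
  moreover have "G.r (rho \<alpha> y) = y" using rho_maps[OF a] yt unfolding homeomorphic_maps_def by blast
  ultimately show ?thesis by simp
qed

lemma rho2: assumes a: "\<alpha> \<in> G.C" and g: "\<gamma> \<in> Bs \<alpha>" shows "rho \<alpha> (G.r \<gamma>) = \<gamma>"
proof -
  have sub: "Bs \<alpha> \<subseteq> G.C" using Bs_prop[OF a] by blast
  have "\<gamma> \<in> topspace (subtopology (gtop G) (Bs \<alpha>))" using g sub by auto
  then show ?thesis using rho_maps[OF a] unfolding homeomorphic_maps_def by blast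
qed

definition N1 :: "'g \<Rightarrow> 's set" where "N1 \<alpha> = {e \<in> S.C. G.r (q e) \<in> G.r ` Bs \<alpha>}"

lemma rq_cont: "continuous_map (gtop S) (gtop G) (G.r \<circ> q)"
  by (rule continuous_map_compose[OF q_cont contG(1)])

lemma N1_open: assumes a: "\<alpha> \<in> G.C" shows "openin (gtop S) (N1 \<alpha>)"
proof -
  have "openin (gtop S) {e \<in> topspace (gtop S). (G.r \<circ> q) e \<in> Us \<alpha>}"
    by (rule openin_continuous_map_preimage[OF rq_cont]) (use Us_prop[OF a] in blast)
  moreover have "{e \<in> topspace (gtop S). (G.r \<circ> q) e \<in> Us \<alpha>} = N1 \<alpha>"
    unfolding N1_def using Us_prop[OF a] by auto
  ultimately show ?thesis by simp
qed

definition bb :: "'g \<Rightarrow> 's \<Rightarrow> 'g" where "bb \<alpha> e = rho \<alpha> (G.r (q e))"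

lemma bb_in: assumes a: "\<alpha> \<in> G.C" and e: "e \<in> N1 \<alpha>"
  shows "bb \<alpha> e \<in> Bs \<alpha> \<and> bb \<alpha> e \<in> G.C \<and> G.r (bb \<alpha> e) = G.r (q e)"
  using rho1[OF a, of "G.r (q e)"] e Bs_prop[OF a] unfolding bb_def N1_def by auto

lemma bb_cont: assumes a: "\<alpha> \<in> G.C"
  shows "continuous_map (subtopology (gtop S) (N1 \<alpha>)) (gtop G) (bb \<alpha>)"
proof -
  have c1: "continuous_map (subtopology (gtop S) (N1 \<alpha>)) (subtopology (gtop G) (G.r ` Bs \<alpha>)) (G.r \<circ> q)"
    by (rule continuous_map_into_subtopology[OF continuous_map_from_subtopology[OF rq_cont]])
       (auto simp: N1_def)
  have "continuous_map (subtopology (gtop S) (N1 \<alpha>)) (subtopology (gtop G) (Bs \<alpha>)) (rho \<alpha> \<circ> (G.r \<circ> q))"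
    by (rule continuous_map_compose[OF c1 rho_cont[OF a]])
  then have "continuous_map (subtopology (gtop S) (N1 \<alpha>)) (gtop G) (rho \<alpha> \<circ> (G.r \<circ> q))"
    by (rule continuous_map_into_fulltopology)
  moreover have "rho \<alpha> \<circ> (G.r \<circ> q) = bb \<alpha>" by (auto simp: bb_def)
  ultimately show ?thesis by simp
qed

definition psi :: "'g \<Rightarrow> 's \<Rightarrow> 's" where "psi \<alpha> e = S.m (S.iv (P (bb \<alpha> e))) e"

lemma Pbb_cont: assumes a: "\<alpha> \<in> G.C"
  shows "continuous_map (subtopology (gtop S) (N1 \<alpha>)) (gtop S) (P \<circ> bb \<alpha>)"
  by (rule continuous_map_compose[OF bb_cont[OF a] P_cont])

lemma psi_cont: assumes a: "\<alpha> \<in> G.C"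
  shows "continuous_map (subtopology (gtop S) (N1 \<alpha>)) (gtop S) (psi \<alpha>)"
proof -
  let ?X = "subtopology (gtop S) (N1 \<alpha>)"
  have c1: "continuous_map ?X (gtop S) (S.iv \<circ> (P \<circ> bb \<alpha>))"
    by (rule continuous_map_compose[OF Pbb_cont[OF a] contS(3)])
  have c2: "continuous_map ?X (gtop S) (\<lambda>e. e)"
    by (rule continuous_map_from_subtopology[OF continuous_map_id[unfolded id_def]])
  have c3: "continuous_map ?X (prod_topology (gtop S) (gtop S)) (\<lambda>e. ((S.iv \<circ> (P \<circ> bb \<alpha>)) e, e))"
    by (rule continuous_map_pairedI[OF c1 c2])
  have c4: "continuous_map ?X (subtopology (prod_topology (gtop S) (gtop S)) (composable S))
     (\<lambda>e. ((S.iv \<circ> (P \<circ> bb \<alpha>)) e, e))"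
  proof (rule continuous_map_into_subtopology[OF c3], rule funcsetI)
    fix e assume "e \<in> topspace ?X"
    then have e: "e \<in> N1 \<alpha>" "e \<in> S.C" by (auto simp: N1_def)
    have b: "bb \<alpha> e \<in> G.C" "G.r (bb \<alpha> e) = G.r (q e)" using bb_in[OF a e(1)] by auto
    have "S.r (P (bb \<alpha> e)) = S.r e" using Sr_eq[of "P (bb \<alpha> e)"] Sr_eq[of e] b e by simp
    then show "((S.iv \<circ> (P \<circ> bb \<alpha>)) e, e) \<in> composable S"
      unfolding composable_def using b e by simp
  qed
  have "continuous_map ?X (gtop S) ((\<lambda>(a, b). S.m a b) \<circ> (\<lambda>e. ((S.iv \<circ> (P \<circ> bb \<alpha>)) e, e)))"
    by (rule continuous_map_compose[OF c4 contS(4)])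
  moreover have "(\<lambda>(a, b). S.m a b) \<circ> (\<lambda>e. ((S.iv \<circ> (P \<circ> bb \<alpha>)) e, e)) = psi \<alpha>"
    by (auto simp: psi_def)
  ultimately show ?thesis by simp
qed

end

context twist
begin

lemma conv2_lc: assumes f: "f \<in> A" and g: "g \<in> A" and e0: "e0 \<in> S.C"
  shows "\<exists>N. openin (gtop S) N \<and> e0 \<in> N \<and> (\<forall>e\<in>N. conv2 f g e = conv2 f g e0)"
proof -
  define x0 where "x0 = G.r (q e0)"
  have x0C: "x0 \<in> G.C" using e0 by (simp add: x0_def)
  define Kf where "Kf = Ksupp f"
  have Kf: "compactin (gtop G) Kf" unfolding Kf_def by (rule Ksupp_cpt[OF f])
  define F0 where "F0 = Gr x0 \<inter> Kf"
  have fF0: "finite F0" unfolding F0_def by (rule finite_GrK[OF x0C Kf])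
  have F0C: "\<And>\<alpha>. \<alpha> \<in> F0 \<Longrightarrow> \<alpha> \<in> G.C \<and> G.r \<alpha> = x0" unfolding F0_def Gr_def by auto
  define Bu where "Bu = \<Union>(Bs ` F0)"
  have Bu_open: "openin (gtop G) Bu" unfolding Bu_def using Bs_prop F0C by blast
  have cl1: "closedin (gtop G) (G.C - Bu)"
    using Bu_open unfolding openin_closedin_eq by simp
  define R where "R = G.r ` ((G.C - Bu) \<inter> Kf)"
  have Rc: "compactin (gtop G) R" unfolding R_def
    by (rule image_compactin[OF closed_Int_compactin[OF cl1 Kf] contG(1)])
  have Rcl: "closedin (gtop G) R" by (rule compactin_imp_closedin[OF HausG Rc])
  define Nout where "Nout = {e \<in> S.C. G.r (q e) \<notin> R}"
  have Nout_open: "openin (gtop S) Nout"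
  proof -
    have "openin (gtop S) {e \<in> topspace (gtop S). (G.r \<circ> q) e \<in> G.C - R}"
      by (rule openin_continuous_map_preimage[OF rq_cont]) (use Rcl in \<open>simp add: closedin_def\<close>)
    moreover have "{e \<in> topspace (gtop S). (G.r \<circ> q) e \<in> G.C - R} = Nout"
      unfolding Nout_def by auto
    ultimately show ?thesis by simp
  qed
  have e0Nout: "e0 \<in> Nout"
  proof -
    have "x0 \<notin> R"
    proof
      assume "x0 \<in> R"
      then obtain \<gamma> where \<gamma>: "\<gamma> \<in> G.C" "\<gamma> \<notin> Bu" "\<gamma> \<in> Kf" "x0 = G.r \<gamma>" unfolding R_def by blast
      then have "\<gamma> \<in> F0" unfolding F0_def Gr_def by simp
      then have "\<gamma> \<in> Bs \<gamma>" using Bs_prop F0C by blast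
      then have "\<gamma> \<in> Bu" unfolding Bu_def using \<open>\<gamma> \<in> F0\<close> by blast
      then show False using \<gamma> by simp
    qed
    then show ?thesis unfolding Nout_def using e0 x0_def by simp
  qed
  have bb0: "e0 \<in> N1 \<alpha> \<and> bb \<alpha> e0 = \<alpha>" if a: "\<alpha> \<in> F0" for \<alpha>
  proof -
    have aC: "\<alpha> \<in> G.C" and ra: "G.r \<alpha> = x0" using F0C[OF a] by auto
    have ab: "\<alpha> \<in> Bs \<alpha>" using Bs_prop[OF aC] by blast
    have "G.r (q e0) \<in> G.r ` Bs \<alpha>" using ab ra x0_def by (auto intro: rev_image_eqI[of \<alpha>])
    then have "e0 \<in> N1 \<alpha>" unfolding N1_def using e0 by simp
    moreover have "bb \<alpha> e0 = \<alpha>" unfolding bb_def using rho2[OF aC ab] ra x0_def by simp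
    ultimately show ?thesis by simp
  qed
  define Cs where "Cs \<alpha> = {e \<in> N1 \<alpha>. (f \<circ> (P \<circ> bb \<alpha>)) e = f (P \<alpha>)} \<inter>
      {e \<in> N1 \<alpha>. (g \<circ> psi \<alpha>) e = g (psi \<alpha> e0)}" for \<alpha>
  have Cs_open: "openin (gtop S) (Cs \<alpha>)" if a: "\<alpha> \<in> F0" for \<alpha>
  proof -
    have aC: "\<alpha> \<in> G.C" using F0C[OF a] by blast
    show ?thesis unfolding Cs_def
      by (intro openin_Int lc_open[OF continuous_map_compose[OF Pbb_cont[OF aC] A_cont[OF f]] N1_open[OF aC]]
          lc_open[OF continuous_map_compose[OF psi_cont[OF aC] A_cont[OF g]] N1_open[OF aC]])
  qed
  have e0Cs: "e0 \<in> Cs \<alpha>" if a: "\<alpha> \<in> F0" for \<alpha>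
    unfolding Cs_def using bb0[OF a] by simp
  define Pairs where "Pairs = {p \<in> F0 \<times> F0. fst p \<noteq> snd p}"
  have fPairs: "finite Pairs" unfolding Pairs_def using fF0 by simp
  define Ds where "Ds p = {e \<in> N1 (fst p) \<inter> N1 (snd p). bb (fst p) e \<noteq> bb (snd p) e}" for p
  have Ds_open: "openin (gtop S) (Ds p)" if p: "p \<in> Pairs" for p
  proof -
    obtain a b where ab: "p = (a, b)" "a \<in> F0" "b \<in> F0" using p unfolding Pairs_def by auto
    have aC: "a \<in> G.C" and bC: "b \<in> G.C" using F0C ab by auto
    let ?W = "N1 a \<inter> N1 b"
    have Wo: "openin (gtop S) ?W" using N1_open[OF aC] N1_open[OF bC] by blast
    let ?X = "subtopology (gtop S) ?W"
    have ca: "continuous_map ?X (gtop G) (bb a)"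
      by (rule continuous_map_from_subtopology_mono[OF bb_cont[OF aC]]) blast
    have cb: "continuous_map ?X (gtop G) (bb b)"
      by (rule continuous_map_from_subtopology_mono[OF bb_cont[OF bC]]) blast
    have "closedin ?X {e \<in> topspace ?X. bb a e = bb b e}"
      by (rule closedin_continuous_maps_eq[OF HausG ca cb])
    then have "openin ?X (topspace ?X - {e \<in> topspace ?X. bb a e = bb b e})"
      by (simp add: closedin_def)
    moreover have "topspace ?X - {e \<in> topspace ?X. bb a e = bb b e} = Ds p"
      unfolding Ds_def ab using openin_subset[OF Wo] by auto
    ultimately show ?thesis using openin_trans_full Wo by metis
  qed
  have e0Ds: "e0 \<in> Ds p" if p: "p \<in> Pairs" for p
  proof -
    obtain a b where ab: "p = (a, b)" "a \<in> F0" "b \<in> F0" "a \<noteq> b" using p unfolding Pairs_def by auto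
    show ?thesis unfolding Ds_def ab using bb0[OF ab(2)] bb0[OF ab(3)] ab(4) by simp
  qed
  define N where "N = (Nout \<inter> \<Inter>(Cs ` F0)) \<inter> \<Inter>(Ds ` Pairs)"
  have No: "openin (gtop S) N" unfolding N_def
    by (intro openin_Int_Inter openin_Int_Inter[OF _ Nout_open])
       (use fF0 fPairs Cs_open Ds_open in auto)
  have e0N: "e0 \<in> N" unfolding N_def using e0Nout e0Cs e0Ds by blast
  define cst where "cst = sum (\<lambda>\<alpha>. f (P \<alpha>) * g (psi \<alpha> e0)) F0"
  have main: "conv2 f g e = cst" if eN: "e \<in> N" for e
  proof -
    have eS: "e \<in> S.C" and eo: "G.r (q e) \<notin> R" using eN unfolding N_def Nout_def by auto
    have eC: "\<And>\<alpha>. \<alpha> \<in> F0 \<Longrightarrow> e \<in> Cs \<alpha>" using eN unfolding N_def by blast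
    have eD: "\<And>p. p \<in> Pairs \<Longrightarrow> e \<in> Ds p" using eN unfolding N_def by blast
    have eN1: "\<And>\<alpha>. \<alpha> \<in> F0 \<Longrightarrow> e \<in> N1 \<alpha>" using eC unfolding Cs_def by blast
    define xe where "xe = G.r (q e)"
    let ?t = "\<lambda>\<gamma>. f (P \<gamma>) * g (S.m (S.iv (P \<gamma>)) e)"
    let ?h = "\<lambda>\<alpha>. bb \<alpha> e"
    have hin: "?h \<alpha> \<in> Gr xe" if a: "\<alpha> \<in> F0" for \<alpha>
      using bb_in[OF _ eN1[OF a]] F0C[OF a] unfolding Gr_def xe_def by auto
    have inj: "inj_on ?h F0"
    proof (rule inj_onI, rule ccontr)
      fix a b assume a: "a \<in> F0" and b: "b \<in> F0" and eq: "bb a e = bb b e" and ne: "a \<noteq> b"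
      have "(a, b) \<in> Pairs" unfolding Pairs_def using a b ne by simp
      then have "e \<in> Ds (a, b)" by (rule eD)
      then show False unfolding Ds_def using eq by simp
    qed
    have "conv2 f g e = fsum ?t (Gr xe)" unfolding conv2_def xe_def using eS by simp
    also have "\<dots> = sum ?t (?h ` F0)"
    proof (rule fsum_eq)
      show "finite (?h ` F0)" using fF0 by simp
      show "?h ` F0 \<subseteq> Gr xe" using hin by blast
      fix \<gamma> assume g1: "\<gamma> \<in> Gr xe" and g2: "\<gamma> \<notin> ?h ` F0"
      have gC: "\<gamma> \<in> G.C" and rg: "G.r \<gamma> = xe" using g1 unfolding Gr_def by auto
      show "?t \<gamma> = 0"
      proof (rule ccontr)
        assume "?t \<gamma> \<noteq> 0"
        then have "f (P \<gamma>) \<noteq> 0" by (metis mult_zero_left)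
        then have gK: "\<gamma> \<in> Kf" unfolding Kf_def using Ksupp_mem[of "P \<gamma>" f] gC by simp
        show False
        proof (cases "\<gamma> \<in> Bu")
          case True
          then obtain \<alpha> where a: "\<alpha> \<in> F0" "\<gamma> \<in> Bs \<alpha>" unfolding Bu_def by blast
          have "bb \<alpha> e = rho \<alpha> (G.r \<gamma>)" unfolding bb_def using rg xe_def by simp
          also have "\<dots> = \<gamma>" by (rule rho2) (use F0C[OF a(1)] a(2) in auto)
          finally show False using g2 a(1) by blast
        next
          case False
          then have "xe \<in> R" unfolding R_def using gC gK rg by blast
          then show False using eo xe_def by simp
        qed
      qed
    qed
    also have "\<dots> = sum (\<lambda>\<alpha>. ?t (?h \<alpha>)) F0" using sum.reindex[OF inj, of ?t] by simp
    also have "\<dots> = cst" unfolding cst_def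
    proof (rule sum.cong[OF refl])
      fix \<alpha> assume a: "\<alpha> \<in> F0"
      have "e \<in> Cs \<alpha>" by (rule eC[OF a])
      then have 1: "f (P (bb \<alpha> e)) = f (P \<alpha>)" and 2: "g (psi \<alpha> e) = g (psi \<alpha> e0)"
        unfolding Cs_def by auto
      show "?t (?h \<alpha>) = f (P \<alpha>) * g (psi \<alpha> e0)" using 1 2 by (simp add: psi_def)
    qed
    finally show ?thesis .
  qed
  show ?thesis using No e0N main by (intro exI[of _ N]) auto
qed

lemma conv2_cont: assumes f: "f \<in> A" and g: "g \<in> A"
  shows "continuous_map (gtop S) (discrete_topology UNIV) (conv2 f g)"
  unfolding cont_discrete_lc using conv2_lc[OF f g] by simp

lemma conv2_A: "f \<in> A \<Longrightarrow> g \<in> A \<Longrightarrow> conv2 f g \<in> A"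
  by (rule conv2_A_of_cont[OF _ _ conv2_cont])

end

context twist
begin

lemma tcP: "f \<in> A \<Longrightarrow> g \<in> A \<Longrightarrow> tconv G S q P f g = conv2 f g"
  by (rule tconv_eq(1)) auto

lemma R_alg: "R_algebra_on A (tconv G S q P)"
  unfolding R_algebra_on_def
proof (intro conjI ballI allI)
  show "(\<lambda>_. 0) \<in> A" by (rule zero_A)
  fix f g assume f: "f \<in> A" and g: "g \<in> A"
  show "(\<lambda>e. f e + g e) \<in> A" by (rule add_A[OF f g])
  show "tconv G S q P f g \<in> A" using tcP[OF f g] conv2_A[OF f g] by simp
  fix h assume h: "h \<in> A"
  show "tconv G S q P (tconv G S q P f g) h = tconv G S q P f (tconv G S q P g h)"
    using tcP[OF f g] tcP[OF g h] tcP[OF conv2_A[OF f g] h] tcP[OF f conv2_A[OF g h]]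
      conv2_assoc[OF f g h] by simp
  show "tconv G S q P f (\<lambda>e. g e + h e) = (\<lambda>e. tconv G S q P f g e + tconv G S q P f h e)"
    using tcP[OF f g] tcP[OF f h] tcP[OF f add_A[OF g h]] conv2_add_r[OF f] by simp
  show "tconv G S q P (\<lambda>e. f e + g e) h = (\<lambda>e. tconv G S q P f h e + tconv G S q P g h e)"
    using tcP[OF f h] tcP[OF g h] tcP[OF add_A[OF f g] h] conv2_add_l[OF f g] by simp
next
  fix c f assume f: "f \<in> A"
  show "(\<lambda>e. c * f e) \<in> A" by (rule smult_A[OF f])
  fix g assume g: "g \<in> A"
  show "tconv G S q P (\<lambda>e. c * f e) g = (\<lambda>e. c * tconv G S q P f g e)"
    using tcP[OF f g] tcP[OF smult_A[OF f] g] conv2_smult_l[OF f] by simp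
  show "tconv G S q P f (\<lambda>e. c * g e) = (\<lambda>e. c * tconv G S q P f g e)"
    using tcP[OF f g] tcP[OF f smult_A[OF g]] conv2_smult_r[OF f] by simp
qed

lemma star_alg: assumes TI: "T_inverse_involution T bar"
  shows "star_algebra_on A (tconv G S q P) (tstar S bar) bar"
  unfolding star_algebra_on_def
proof (intro conjI ballI allI R_alg)
  fix f assume f: "f \<in> A"
  show "tstar S bar f \<in> A" by (rule st_in_A[OF TI f])
  show "tstar S bar (tstar S bar f) = f" by (rule st_st[OF TI f])
  fix g assume g: "g \<in> A"
  show "tstar S bar (\<lambda>e. f e + g e) = (\<lambda>e. tstar S bar f e + tstar S bar g e)"
    by (rule st_add[OF TI])
  show "tstar S bar (tconv G S q P f g) = tconv G S q P (tstar S bar g) (tstar S bar f)"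
    using tcP[OF f g] tcP[OF st_in_A[OF TI g] st_in_A[OF TI f]] st_conv[OF TI f g] by simp
next
  fix c f assume f: "f \<in> A"
  show "tstar S bar (\<lambda>e. c * f e) = (\<lambda>e. bar c * tstar S bar f e)" by (rule st_smult[OF TI])
qed

end

theorem proposition4p21:
  fixes G :: "'g tgroupoid" and S :: "'s tgroupoid" and T :: "'r::comm_ring_1 set"
    and i :: "'g \<times> 'r \<Rightarrow> 's" and q :: "'s \<Rightarrow> 'g" and P :: "'g \<Rightarrow> 's"
  assumes "ample_groupoid G"
    and "unit_subgroup T"
    and "discrete_twist G T S i q"
    and "topologically_trivial G S q"
    and "continuous_global_section G S q P"
  shows "(\<forall>f\<in>twisted_steinberg G T S i q. \<forall>g\<in>twisted_steinberg G T S i q.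
            \<forall>e\<in>gcarrier S. finite (conv_support G S q P f g e)) \<and>
         (\<forall>P'. continuous_global_section G S q P' \<longrightarrow>
            (\<forall>f\<in>twisted_steinberg G T S i q. \<forall>g\<in>twisted_steinberg G T S i q.
               tconv G S q P' f g = tconv G S q P f g)) \<and>
         (\<forall>f\<in>twisted_steinberg G T S i q. \<forall>g\<in>twisted_steinberg G T S i q.
            tconv G S q P f g \<in> twisted_steinberg G T S i q) \<and>
         R_algebra_on (twisted_steinberg G T S i q) (tconv G S q P) \<and>
         (\<forall>bar. T_inverse_involution T bar \<longrightarrow>
            star_algebra_on (twisted_steinberg G T S i q) (tconv G S q P) (tstar S bar) bar)"
proof -
  interpret twist G T S i q P
    by (rule twist.intro) (use assms in simp_all)
  have c1: "\<forall>f\<in>A. \<forall>g\<in>A. \<forall>e\<in>S.C. finite (conv_support G S q P f g e)"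
    using tconv_eq(2) by simp
  have c2: "\<forall>P'. continuous_global_section G S q P' \<longrightarrow>
            (\<forall>f\<in>A. \<forall>g\<in>A. tconv G S q P' f g = tconv G S q P f g)"
  proof (intro allI impI ballI)
    fix P' f g assume P': "continuous_global_section G S q P'" and f: "f \<in> A" and g: "g \<in> A"
    have "\<And>\<gamma>. \<gamma> \<in> G.C \<Longrightarrow> P' \<gamma> \<in> S.C \<and> q (P' \<gamma>) = \<gamma>"
    proof -
      fix \<gamma> assume gC: "\<gamma> \<in> G.C"
      have "continuous_map (gtop G) (gtop S) P'" and "\<forall>\<gamma>\<in>G.C. q (P' \<gamma>) = \<gamma>"
        using P' unfolding continuous_global_section_def by simp_all
      then show "P' \<gamma> \<in> S.C \<and> q (P' \<gamma>) = \<gamma>"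
        using continuous_map_image_subset_topspace gC by fastforce
    qed
    then have "tconv G S q P' f g = conv2 f g" by (rule tconv_eq(1)[OF f g])
    then show "tconv G S q P' f g = tconv G S q P f g" using tcP[OF f g] by simp
  qed
  have c3: "\<forall>f\<in>A. \<forall>g\<in>A. tconv G S q P f g \<in> A"
    using tcP conv2_A by simp
  show ?thesis using c1 c2 c3 R_alg star_alg by blast
qed


end
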